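(* Let $\alpha\in(0,1]$ and let $\mathcal{N}[\varphi]=\mathbb{E}[\varphi(\xi)]=\sup_{\mu\in\Theta}\mu[\varphi]$ be a sublinear expectation on $C_{b,Lip}(\mathbb{R})$ satisfying condition (H) below. Let $p(a)=\mathbb{E}[a\xi]$, $a\in\mathbb{R}$. Let $v\in C_b^{1,\alpha}(\mathbb{R}\times\mathbb{R}_+)$ be a solution to $$\partial_tv(x,t)-p(\partial_xv(x,t))=f(x,t),\ (x,t)\in\mathbb{R}\times(0,\infty),\qquad v(x,0)=\phi(x),$$ for some $\phi\in C_{b,Lip}(\mathbb{R})$. For $0\le t\le\bar t\le1$, set $\delta=\bar t-t$. Then $$v(0,\bar t)-\mathbb{E}[v(\delta\xi,t)]\ge-4\delta^\alpha\int_t^{\bar t}[\partial_xv(\cdot,s)]_\alpha ds\times\mathbb{E}[|\xi|^{1+\alpha}]-\int_t^{\bar t}\mathbb{E}[-f((\bar t-s)\xi,s)]ds,$$ and $$v(0,\bar t)-\mathbb{E}[v(\delta\xi,t)]\le 4\delta^\alpha\int_t^{\bar t}[\partial_xv(\cdot,s)]_\alpha ds\times\mathbb{E}[|\xi|^{1+\alpha}]+\int_t^{\bar t}\mathbb{E}[f((\bar t-s)\xi,s)]ds.$$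
   Context: A sublinear expectation on $C_{b,Lip}(\mathbb{R})$ (bounded Lipschitz functions) is a monotone, positively homogeneous, constant-preserving, subadditive functional continuous from above along sequences decreasing to $0$; it is represented as $\mathcal{N}[\varphi]=\sup_{\mu\in\Theta}\mu[\varphi]$ for a weakly compact set $\Theta$ of Borel probability measures on $\mathbb{R}$, and is extended to other measurable functions by the same supremum. Notation: $\xi(x)=x$, $\mathbb{E}[\varphi(\xi)]=\mathcal{N}[\varphi]$. Condition (H): $\lim_{N\to\infty}\mathcal{N}[|x|1_{[|x|>N]}]=0$. $C_b^{1,\alpha}(\mathbb{R}\times\mathbb{R}_+)$ denotes bounded functions on $\mathbb{R}\times[0,\infty)$ with bounded continuous first-order partial derivatives that are $\alpha$-Hölder continuous; $[\partial_xv(\cdot,s)]_\alpha=\sup_{x\ne y}|\partial_xv(x,s)-\partial_xv(y,s)|/|x-y|^\alpha$. *)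

theory Defs
  imports "HOL-Analysis.Analysis" "HOL-Probability.Probability"
begin

definition weakly_compact_probs :: "real measure set \<Rightarrow> bool" where
  "weakly_compact_probs \<Theta> \<longleftrightarrow>
     \<Theta> \<noteq> {} \<and>
     (\<forall>\<mu>\<in>\<Theta>. prob_space \<mu> \<and> sets \<mu> = sets borel) \<and>
     (\<forall>M::nat \<Rightarrow> real measure. (\<forall>n. M n \<in> \<Theta>) \<longrightarrow>
        (\<exists>(r::nat \<Rightarrow> nat) \<mu>. strict_mono r \<and> \<mu> \<in> \<Theta> \<and> weak_conv_m (M \<circ> r) \<mu>))"

text \<open>Sublinear expectation E[phi(xi)] = sup over Theta of mu[phi] (Bochner integral; used for
  functions that are integrable under every mu in Theta).\<close>
definition sublin_E :: "real measure set \<Rightarrow> (real \<Rightarrow> real) \<Rightarrow> real" where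
  "sublin_E \<Theta> \<phi> = (SUP \<mu>\<in>\<Theta>. integral\<^sup>L \<mu> \<phi>)"

definition sublin_E_nn :: "real measure set \<Rightarrow> (real \<Rightarrow> real) \<Rightarrow> ennreal" where
  "sublin_E_nn \<Theta> \<phi> = (SUP \<mu>\<in>\<Theta>. \<integral>\<^sup>+ x. ennreal (\<phi> x) \<partial>\<mu>)"

definition cond_H :: "real measure set \<Rightarrow> bool" where
  "cond_H \<Theta> \<longleftrightarrow>
     ((\<lambda>N::real. sublin_E_nn \<Theta> (\<lambda>x. \<bar>x\<bar> * indicator {y. \<bar>y\<bar> > N} x)) \<longlongrightarrow> 0) at_top"

definition holder_seminorm :: "real \<Rightarrow> (real \<Rightarrow> real) \<Rightarrow> real" where
  "holder_seminorm \<alpha> g = Sup {\<bar>g x - g y\<bar> / \<bar>x - y\<bar> powr \<alpha> | x y. x \<noteq> y}"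

definition C_b_Lip :: "(real \<Rightarrow> real) \<Rightarrow> bool" where
  "C_b_Lip \<phi> \<longleftrightarrow> bounded (range \<phi>) \<and> (\<exists>L. \<forall>x y. \<bar>\<phi> x - \<phi> y\<bar> \<le> L * \<bar>x - y\<bar>)"

definition C_b_1_alpha ::
  "real \<Rightarrow> (real \<Rightarrow> real \<Rightarrow> real) \<Rightarrow> (real \<Rightarrow> real \<Rightarrow> real) \<Rightarrow> (real \<Rightarrow> real \<Rightarrow> real) \<Rightarrow> bool" where
  "C_b_1_alpha \<alpha> v vx vt \<longleftrightarrow>
     (\<exists>B. \<forall>x s. s \<ge> 0 \<longrightarrow> \<bar>v x s\<bar> \<le> B \<and> \<bar>vx x s\<bar> \<le> B \<and> \<bar>vt x s\<bar> \<le> B) \<and>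
     (\<forall>x s. s \<ge> 0 \<longrightarrow> ((\<lambda>y. v y s) has_real_derivative vx x s) (at x)) \<and>
     (\<forall>x s. s \<ge> 0 \<longrightarrow> ((\<lambda>r. v x r) has_real_derivative vt x s) (at s within {0..})) \<and>
     (\<exists>C. \<forall>x y s r. s \<ge> 0 \<longrightarrow> r \<ge> 0 \<longrightarrow>
        \<bar>vx x s - vx y r\<bar> \<le> C * dist (x, s) (y, r) powr \<alpha> \<and>
        \<bar>vt x s - vt y r\<bar> \<le> C * dist (x, s) (y, r) powr \<alpha>)"

end

theory Submission
  imports Defs
begin

lemma mvt_dev:
  fixes f f' :: "real \<Rightarrow> real"
  assumes "a \<le> b"
    and d: "\<And>z. a \<le> z \<Longrightarrow> z \<le> b \<Longrightarrow> (f has_real_derivative f' z) (at z within {a..b})"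
    and e: "\<And>z. a \<le> z \<Longrightarrow> z \<le> b \<Longrightarrow> \<bar>f' z - c\<bar> \<le> e"
  shows "\<bar>f b - f a - (b - a) * c\<bar> \<le> (b - a) * e"
proof -
  have "\<exists>x\<in>{a..b}. (\<lambda>z. f z - z * c) b - (\<lambda>z. f z - z * c) a = (\<lambda>h. h * (f' x - c)) (b - a)"
  proof (rule mvt_very_simple[OF assms(1)])
    fix x assume "a \<le> x" "x \<le> b"
    have "((\<lambda>z. f z - z * c) has_real_derivative (f' x - c)) (at x within {a..b})"
      using d[OF \<open>a \<le> x\<close> \<open>x \<le> b\<close>] by (intro derivative_eq_intros) auto
    then show "((\<lambda>z. f z - z * c) has_derivative (\<lambda>h. h * (f' x - c))) (at x within {a..b})"
      by (simp add: has_field_derivative_def mult.commute[of _ "f' x - c"])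
  qed
  then obtain x where x: "x \<in> {a..b}" "f b - b * c - (f a - a * c) = (b - a) * (f' x - c)" by auto
  have "f b - f a - (b - a) * c = (b - a) * (f' x - c)" using x(2) by (simp add: algebra_simps)
  then have "\<bar>f b - f a - (b - a) * c\<bar> = (b - a) * \<bar>f' x - c\<bar>"
    using assms(1) by (simp add: abs_mult)
  also have "\<dots> \<le> (b - a) * e" using e[of x] x(1) assms(1) by (intro mult_left_mono) auto
  finally show ?thesis .
qed

lemma holder_cont:
  fixes g :: "real \<Rightarrow> real"
  assumes "0 < a" and h: "\<And>x y. \<bar>g x - g y\<bar> \<le> c * \<bar>x - y\<bar> powr a"
  shows "continuous_on UNIV g"
proof -
  have "isCont g x" for x
  proof -
    have "((\<lambda>y. g y - g x) \<longlongrightarrow> 0) (at x)"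
    proof (rule Lim_null_comparison)
      show "\<forall>\<^sub>F y in at x. norm (g y - g x) \<le> c * \<bar>y - x\<bar> powr a"
        using h by simp
      have "((\<lambda>y. \<bar>y - x\<bar> powr a) \<longlongrightarrow> 0) (at x)"
        by (rule tendsto_zero_powrI) (auto intro!: tendsto_eq_intros simp: assms)
      then show "((\<lambda>y. c * \<bar>y - x\<bar> powr a) \<longlongrightarrow> 0) (at x)"
        using tendsto_mult_right_zero by blast
    qed
    then show ?thesis unfolding isCont_def using Lim_null by (simp add: LIM_zero_iff)
  qed
  then show ?thesis by (simp add: continuous_at_imp_continuous_on)
qed

locale P33 =
  fixes \<alpha> :: real and \<Theta> :: "real measure set" and v vx vt :: "real \<Rightarrow> real \<Rightarrow> real"
  assumes alpha: "0 < \<alpha>" "\<alpha> \<le> 1" and Theta: "weakly_compact_probs \<Theta>"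
    and H: "cond_H \<Theta>" and reg: "C_b_1_alpha \<alpha> v vx vt"
begin

lemma Theta_ne: "\<Theta> \<noteq> {}" using Theta by (simp add: weakly_compact_probs_def)
lemma prob: "\<mu> \<in> \<Theta> \<Longrightarrow> prob_space \<mu>" using Theta by (simp add: weakly_compact_probs_def)
lemma sets_mu: "\<mu> \<in> \<Theta> \<Longrightarrow> sets \<mu> = sets borel" using Theta by (simp add: weakly_compact_probs_def)
lemma space_mu: "\<mu> \<in> \<Theta> \<Longrightarrow> space \<mu> = UNIV"
  using sets_eq_imp_space_eq[OF sets_mu] by simp
lemma meas_mu: "\<mu> \<in> \<Theta> \<Longrightarrow> g \<in> borel_measurable borel \<Longrightarrow> g \<in> borel_measurable \<mu>"
  using measurable_cong_sets[OF sets_mu refl] by blast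

definition Bc where "Bc = (SOME B. \<forall>x s. s \<ge> 0 \<longrightarrow> \<bar>v x s\<bar> \<le> B \<and> \<bar>vx x s\<bar> \<le> B \<and> \<bar>vt x s\<bar> \<le> B)"
definition Cc where "Cc = (SOME C. \<forall>x y s r. s \<ge> 0 \<longrightarrow> r \<ge> 0 \<longrightarrow>
        \<bar>vx x s - vx y r\<bar> \<le> C * dist (x, s) (y, r) powr \<alpha> \<and>
        \<bar>vt x s - vt y r\<bar> \<le> C * dist (x, s) (y, r) powr \<alpha>)"

lemma Bc_all: "\<forall>x s. s \<ge> 0 \<longrightarrow> \<bar>v x s\<bar> \<le> Bc \<and> \<bar>vx x s\<bar> \<le> Bc \<and> \<bar>vt x s\<bar> \<le> Bc"
  unfolding Bc_def by (rule someI_ex) (use reg in \<open>auto simp: C_b_1_alpha_def\<close>)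
lemma Bv: "s \<ge> 0 \<Longrightarrow> \<bar>v x s\<bar> \<le> Bc" using Bc_all by blast
lemma Bvx: "s \<ge> 0 \<Longrightarrow> \<bar>vx x s\<bar> \<le> Bc" using Bc_all by blast
lemma Bvt: "s \<ge> 0 \<Longrightarrow> \<bar>vt x s\<bar> \<le> Bc" using Bc_all by blast
lemma Bc_nn: "Bc \<ge> 0" using Bv[of 0 0] by simp

lemma Cc_all: "\<forall>x y s r. s \<ge> 0 \<longrightarrow> r \<ge> 0 \<longrightarrow>
        \<bar>vx x s - vx y r\<bar> \<le> Cc * dist (x, s) (y, r) powr \<alpha> \<and>
        \<bar>vt x s - vt y r\<bar> \<le> Cc * dist (x, s) (y, r) powr \<alpha>"
  unfolding Cc_def by (rule someI_ex) (use reg in \<open>auto simp: C_b_1_alpha_def\<close>)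

lemma Cc_nn: "Cc \<ge> 0"
proof -
  have "\<bar>vx 1 0 - vx 0 0\<bar> \<le> Cc * dist (1::real, 0::real) (0, 0) powr \<alpha>" using Cc_all by auto
  moreover have "dist (1::real, 0::real) (0, 0) = 1" by (simp add: dist_Pair_Pair)
  ultimately show ?thesis by simp
qed

lemma dist_le: "dist (x::real, s::real) (y, r) powr \<alpha> \<le> (\<bar>x - y\<bar> + \<bar>s - r\<bar>) powr \<alpha>"
proof -
  have "dist (x, s) (y, r) \<le> \<bar>x - y\<bar> + \<bar>s - r\<bar>"
    by (simp add: dist_Pair_Pair dist_real_def sqrt_sum_squares_le_sum_abs)
  then show ?thesis using alpha by (intro powr_mono2) auto
qed

lemma Cvx: "s \<ge> 0 \<Longrightarrow> r \<ge> 0 \<Longrightarrow> \<bar>vx x s - vx y r\<bar> \<le> Cc * (\<bar>x - y\<bar> + \<bar>s - r\<bar>) powr \<alpha>"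
  using Cc_all dist_le Cc_nn by (meson mult_left_mono order_trans)
lemma Cvt: "s \<ge> 0 \<Longrightarrow> r \<ge> 0 \<Longrightarrow> \<bar>vt x s - vt y r\<bar> \<le> Cc * (\<bar>x - y\<bar> + \<bar>s - r\<bar>) powr \<alpha>"
  using Cc_all dist_le Cc_nn by (meson mult_left_mono order_trans)

lemma dvx: "s \<ge> 0 \<Longrightarrow> ((\<lambda>y. v y s) has_real_derivative vx x s) (at x)"
  using reg by (simp add: C_b_1_alpha_def)
lemma dvt: "s \<ge> 0 \<Longrightarrow> ((\<lambda>r. v x r) has_real_derivative vt x s) (at s within {0..})"
  using reg by (simp add: C_b_1_alpha_def)

lemma cont_vx: "s \<ge> 0 \<Longrightarrow> continuous_on UNIV (\<lambda>x. vx x s)"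
  by (rule holder_cont[OF alpha(1), of _ Cc]) (use Cvx[of s s] in simp)
lemma cont_vt: "s \<ge> 0 \<Longrightarrow> continuous_on UNIV (\<lambda>x. vt x s)"
  by (rule holder_cont[OF alpha(1), of _ Cc]) (use Cvt[of s s] in simp)
lemma cont_v: "s \<ge> 0 \<Longrightarrow> continuous_on UNIV (\<lambda>x. v x s)"
  using dvx by (meson DERIV_isCont continuous_at_imp_continuous_on)


lemma v_dev_x:
  assumes s: "s \<ge> 0" and e: "\<And>z. min x x' \<le> z \<Longrightarrow> z \<le> max x x' \<Longrightarrow> \<bar>vx z s - c\<bar> \<le> e"
  shows "\<bar>v x' s - v x s - (x' - x) * c\<bar> \<le> \<bar>x' - x\<bar> * e"
proof (cases "x \<le> x'")
  case True
  have "\<bar>(\<lambda>y. v y s) x' - (\<lambda>y. v y s) x - (x' - x) * c\<bar> \<le> (x' - x) * e"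
    by (rule mvt_dev[OF True, where f' = "\<lambda>z. vx z s"])
      (use True e in \<open>auto intro: has_field_derivative_at_within dvx[OF s]\<close>)
  then show ?thesis using True by simp
next
  case False
  have "\<bar>(\<lambda>y. v y s) x - (\<lambda>y. v y s) x' - (x - x') * c\<bar> \<le> (x - x') * e"
    by (rule mvt_dev[where f' = "\<lambda>z. vx z s"])
      (use False e in \<open>auto intro: has_field_derivative_at_within dvx[OF s]\<close>)
  moreover have "\<bar>v x' s - v x s - (x' - x) * c\<bar> = \<bar>v x s - v x' s - (x - x') * c\<bar>"
    by (simp add: abs_minus_commute algebra_simps)
  ultimately show ?thesis using False by simp
qed

lemma v_dev_t:
  assumes s: "0 \<le> s" "s \<le> s'" and e: "\<And>z. s \<le> z \<Longrightarrow> z \<le> s' \<Longrightarrow> \<bar>vt x z - c\<bar> \<le> e"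
  shows "\<bar>v x s' - v x s - (s' - s) * c\<bar> \<le> (s' - s) * e"
  by (rule mvt_dev[OF s(2), where f = "\<lambda>r. v x r" and f' = "\<lambda>z. vt x z"])
    (use s e in \<open>auto intro: DERIV_subset[OF dvt]\<close>)

lemma v_lip_x: "s \<ge> 0 \<Longrightarrow> \<bar>v x' s - v x s\<bar> \<le> Bc * \<bar>x' - x\<bar>"
  using v_dev_x[of s x x' 0 Bc] Bvx by (simp add: mult.commute)

lemma v_lip_t: "s \<ge> 0 \<Longrightarrow> s' \<ge> 0 \<Longrightarrow> \<bar>v x s' - v x s\<bar> \<le> Bc * \<bar>s' - s\<bar>"
proof (cases "s \<le> s'")
  case True
  assume "s \<ge> 0" "s' \<ge> 0"
  then show ?thesis using v_dev_t[of s s' x 0 Bc] Bvt True by (simp add: mult.commute)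
next
  case False
  assume "s \<ge> 0" "s' \<ge> 0"
  then have "\<bar>v x s - v x s'\<bar> \<le> (s - s') * Bc" using v_dev_t[of s' s x 0 Bc] Bvt False by simp
  then show ?thesis using False by (simp add: abs_minus_commute mult.commute)
qed

definition Kh where "Kh r = holder_seminorm \<alpha> (\<lambda>x. vx x r)"

lemma K_bdd: "r \<ge> 0 \<Longrightarrow> bdd_above {\<bar>vx x r - vx y r\<bar> / \<bar>x - y\<bar> powr \<alpha> | x y. x \<noteq> y}"
proof -
  assume r: "r \<ge> 0"
  { fix x y :: real assume "x \<noteq> y"
    then have pos: "\<bar>x - y\<bar> powr \<alpha> > 0" by simp
    have "\<bar>vx x r - vx y r\<bar> \<le> Cc * \<bar>x - y\<bar> powr \<alpha>" using Cvx[OF r r, of x y] by simp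
    then have "\<bar>vx x r - vx y r\<bar> / \<bar>x - y\<bar> powr \<alpha> \<le> Cc" using pos by (simp add: divide_le_eq) }
  then show ?thesis by (auto intro!: bdd_aboveI[of _ Cc])
qed

lemma K_upper: "r \<ge> 0 \<Longrightarrow> \<bar>vx x r - vx y r\<bar> \<le> Kh r * \<bar>x - y\<bar> powr \<alpha>"
proof (cases "x = y")
  case False
  assume r: "r \<ge> 0"
  have pos: "\<bar>x - y\<bar> powr \<alpha> > 0" using False by simp
  have "\<bar>vx x r - vx y r\<bar> / \<bar>x - y\<bar> powr \<alpha> \<le> Kh r"
    unfolding Kh_def holder_seminorm_def using False by (intro cSup_upper K_bdd[OF r]) auto
  then show ?thesis using pos by (simp add: divide_le_eq)
qed simp

lemma K_le: "r \<ge> 0 \<Longrightarrow> Kh r \<le> Cc"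
  unfolding Kh_def holder_seminorm_def
proof (rule cSup_least)
  show "{\<bar>vx x r - vx y r\<bar> / \<bar>x - y\<bar> powr \<alpha> |x y. x \<noteq> y} \<noteq> {}" by auto
  fix q assume r: "r \<ge> 0" and "q \<in> {\<bar>vx x r - vx y r\<bar> / \<bar>x - y\<bar> powr \<alpha> |x y. x \<noteq> y}"
  then obtain x y where q: "q = \<bar>vx x r - vx y r\<bar> / \<bar>x - y\<bar> powr \<alpha>" "x \<noteq> y" by auto
  then have pos: "\<bar>x - y\<bar> powr \<alpha> > 0" by simp
  have "\<bar>vx x r - vx y r\<bar> \<le> Cc * \<bar>x - y\<bar> powr \<alpha>" using Cvx[OF r r, of x y] by simp
  then show "q \<le> Cc" using pos q by (simp add: divide_le_eq)
qed

lemma K_nn: "r \<ge> 0 \<Longrightarrow> 0 \<le> Kh r"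
  using K_upper[of r 1 0] by simp

lemma K_lsc:
  assumes r: "r \<ge> 0" and a: "a < Kh r"
  shows "\<exists>d>0. \<forall>r'. r' \<ge> 0 \<longrightarrow> \<bar>r' - r\<bar> < d \<longrightarrow> a < Kh r'"
proof -
  have "a < Sup {\<bar>vx x r - vx y r\<bar> / \<bar>x - y\<bar> powr \<alpha> |x y. x \<noteq> y}"
    using a by (simp add: Kh_def holder_seminorm_def)
  from less_cSupD[OF _ this] obtain x y where xy: "x \<noteq> y" "a < \<bar>vx x r - vx y r\<bar> / \<bar>x - y\<bar> powr \<alpha>"
    by auto
  define w where "w = \<bar>x - y\<bar> powr \<alpha>"
  have w: "w > 0" using xy by (simp add: w_def)
  define gap where "gap = \<bar>vx x r - vx y r\<bar> - a * w"
  have gap: "gap > 0" using xy w by (simp add: gap_def w_def pos_less_divide_eq)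
  define d where "d = (gap / (2 * Cc + 1)) powr (1 / \<alpha>)"
  have Cp: "2 * Cc + 1 > 0" using Cc_nn by simp
  have d: "d > 0" using gap Cp by (simp add: d_def)
  have dpow: "d powr \<alpha> = gap / (2 * Cc + 1)" using gap Cp alpha by (simp add: d_def powr_powr)
  show ?thesis
  proof (intro exI[of _ d] conjI allI impI d)
    fix r' assume r': "r' \<ge> 0" "\<bar>r' - r\<bar> < d"
    have "\<bar>r' - r\<bar> powr \<alpha> \<le> d powr \<alpha>" using r' alpha by (intro powr_mono2) auto
    then have rp: "\<bar>r' - r\<bar> powr \<alpha> \<le> gap / (2 * Cc + 1)" using dpow by simp
    have "2 * Cc * \<bar>r' - r\<bar> powr \<alpha> < gap"
    proof -
      have "2 * Cc * \<bar>r' - r\<bar> powr \<alpha> \<le> 2 * Cc * (gap / (2 * Cc + 1))"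
        using rp Cc_nn by (intro mult_left_mono) auto
      also have "\<dots> < gap" using gap Cp Cc_nn by (simp add: field_simps)
      finally show ?thesis .
    qed
    moreover have "\<bar>vx x r' - vx x r\<bar> \<le> Cc * \<bar>r' - r\<bar> powr \<alpha>" using Cvx[OF r' (1) r, of x x] by simp
    moreover have "\<bar>vx y r' - vx y r\<bar> \<le> Cc * \<bar>r' - r\<bar> powr \<alpha>" using Cvx[OF r' (1) r, of y y] by simp
    ultimately have "a * w < \<bar>vx x r' - vx y r'\<bar>" unfolding gap_def by linarith
    then have "a < \<bar>vx x r' - vx y r'\<bar> / \<bar>x - y\<bar> powr \<alpha>" using w by (simp add: w_def pos_less_divide_eq)
    also have "\<dots> \<le> Kh r'"
      unfolding Kh_def holder_seminorm_def using xy(1) by (intro cSup_upper K_bdd[OF r'(1)]) auto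
    finally show "a < Kh r'" .
  qed
qed

end

context P33 begin

lemma E_ge: "\<mu> \<in> \<Theta> \<Longrightarrow> (\<And>\<nu>. \<nu> \<in> \<Theta> \<Longrightarrow> integral\<^sup>L \<nu> g \<le> c) \<Longrightarrow> integral\<^sup>L \<mu> g \<le> sublin_E \<Theta> g"
  unfolding sublin_E_def by (rule cSUP_upper) (auto intro!: bdd_aboveI2)

lemma E_le: "(\<And>\<nu>. \<nu> \<in> \<Theta> \<Longrightarrow> integral\<^sup>L \<nu> g \<le> c) \<Longrightarrow> sublin_E \<Theta> g \<le> c"
  unfolding sublin_E_def using Theta_ne by (intro cSUP_least) auto

lemma E_approx:
  assumes "\<And>\<nu>. \<nu> \<in> \<Theta> \<Longrightarrow> integral\<^sup>L \<nu> g \<le> c" "e > 0"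
  shows "\<exists>\<mu>\<in>\<Theta>. sublin_E \<Theta> g - e < integral\<^sup>L \<mu> g"
proof -
  have bdd: "bdd_above ((\<lambda>\<nu>. integral\<^sup>L \<nu> g) ` \<Theta>)" by (rule bdd_aboveI2) (rule assms(1))
  have "sublin_E \<Theta> g - e < sublin_E \<Theta> g" using assms by simp
  then show ?thesis unfolding sublin_E_def using less_cSUP_iff[OF Theta_ne bdd] by blast
qed

lemma E_mono:
  assumes "\<And>\<nu>. \<nu> \<in> \<Theta> \<Longrightarrow> integral\<^sup>L \<nu> g2 \<le> c"
    and "\<And>\<nu>. \<nu> \<in> \<Theta> \<Longrightarrow> integral\<^sup>L \<nu> g1 \<le> integral\<^sup>L \<nu> g2 + d"
  shows "sublin_E \<Theta> g1 \<le> sublin_E \<Theta> g2 + d"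
proof -
  have "sublin_E \<Theta> g1 - d \<le> sublin_E \<Theta> g2"
  proof -
    have "sublin_E \<Theta> g1 \<le> sublin_E \<Theta> g2 + d"
      by (rule E_le) (use E_ge[OF _ assms(1)] assms(2) in force)
    then show ?thesis by simp
  qed
  then show ?thesis by simp
qed

lemma int_bound:
  assumes mu: "\<mu> \<in> \<Theta>" and m: "g \<in> borel_measurable borel"
    and b: "\<And>y. \<bar>g y\<bar> \<le> c + d * \<bar>y\<bar>" and int1: "integrable \<mu> (\<lambda>y. y)"
  shows "integrable \<mu> g"
proof (rule Bochner_Integration.integrable_bound[of \<mu> "\<lambda>y. c + d * \<bar>y\<bar>"])
  interpret prob_space \<mu> using prob[OF mu] .
  show "integrable \<mu> (\<lambda>y. c + d * \<bar>y\<bar>)" using int1 by auto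
  show "g \<in> borel_measurable \<mu>" using meas_mu[OF mu m] .
  show "AE x in \<mu>. norm (g x) \<le> norm (c + d * \<bar>x\<bar>)" by (rule AE_I2) (simp, rule order_trans[OF b abs_ge_self])
qed

definition T where "T N = sublin_E_nn \<Theta> (\<lambda>x. \<bar>x\<bar> * indicator {y. \<bar>y\<bar> > N} x)"

lemma T_lim: "(T \<longlongrightarrow> 0) at_top" using H by (simp add: cond_H_def T_def[abs_def])

lemma T_small: "e > 0 \<Longrightarrow> \<exists>N\<ge>1. T N < ennreal e"
proof -
  assume e: "e > 0"
  have "eventually (\<lambda>N. T N < ennreal e) at_top"
    using order_tendstoD(2)[OF T_lim] e by simp
  then obtain N0 where "\<And>N. N \<ge> N0 \<Longrightarrow> T N < ennreal e" by (auto simp: eventually_at_top_linorder)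
  then show ?thesis by (intro exI[of _ "max N0 1"]) auto
qed

lemma nn_le_T: "\<mu> \<in> \<Theta> \<Longrightarrow> (\<integral>\<^sup>+ x. ennreal (\<bar>x\<bar> * indicator {y. \<bar>y\<bar> > N} x) \<partial>\<mu>) \<le> T N"
  unfolding T_def sublin_E_nn_def by (rule SUP_upper)

lemma mom1: "\<exists>N\<ge>0. \<forall>\<mu>\<in>\<Theta>. (\<integral>\<^sup>+ y. ennreal \<bar>y\<bar> \<partial>\<mu>) \<le> ennreal N"
proof -
  obtain N where N: "N \<ge> 1" "T N < ennreal 1" using T_small[of 1] by auto
  show ?thesis
  proof (intro exI[of _ "N + 1"] conjI ballI)
    fix \<mu> assume mu: "\<mu> \<in> \<Theta>"
    interpret prob_space \<mu> using prob[OF mu] .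
    have "(\<integral>\<^sup>+ y. ennreal \<bar>y\<bar> \<partial>\<mu>) \<le> (\<integral>\<^sup>+ y. (ennreal N + ennreal (\<bar>y\<bar> * indicator {y. \<bar>y\<bar> > N} y)) \<partial>\<mu>)"
    proof (rule nn_integral_mono)
      fix y
      have "\<bar>y\<bar> \<le> N + \<bar>y\<bar> * indicator {y. \<bar>y\<bar> > N} y" using N by (auto simp: indicator_def)
      then show "ennreal \<bar>y\<bar> \<le> ennreal N + ennreal (\<bar>y\<bar> * indicator {y. \<bar>y\<bar> > N} y)"
        using N by (simp add: ennreal_plus[symmetric] ennreal_leI del: ennreal_plus)
    qed
    also have "\<dots> = (\<integral>\<^sup>+ y. ennreal N \<partial>\<mu>) + (\<integral>\<^sup>+ y. ennreal (\<bar>y\<bar> * indicator {y. \<bar>y\<bar> > N} y) \<partial>\<mu>)"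
      by (rule nn_integral_add) (auto intro!: meas_mu[OF mu])
    also have "\<dots> \<le> ennreal N + T N"
      using nn_le_T[OF mu] by (intro add_mono) (auto simp: emeasure_space_1)
    also have "\<dots> \<le> ennreal N + ennreal 1" using N by (intro add_mono) auto
    also have "\<dots> = ennreal (N + 1)" using N by (simp add: ennreal_plus)
    finally show "(\<integral>\<^sup>+ y. ennreal \<bar>y\<bar> \<partial>\<mu>) \<le> ennreal (N + 1)" .
  qed (use N in auto)
qed

definition N1 where "N1 = (SOME N. N \<ge> 0 \<and> (\<forall>\<mu>\<in>\<Theta>. (\<integral>\<^sup>+ y. ennreal \<bar>y\<bar> \<partial>\<mu>) \<le> ennreal N))"
lemma N1: "N1 \<ge> 0" "\<mu> \<in> \<Theta> \<Longrightarrow> (\<integral>\<^sup>+ y. ennreal \<bar>y\<bar> \<partial>\<mu>) \<le> ennreal N1"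
  using someI_ex[OF mom1] unfolding N1_def by auto

lemma int_id: "\<mu> \<in> \<Theta> \<Longrightarrow> integrable \<mu> (\<lambda>y. y)"
proof (rule integrableI_bounded)
  assume mu: "\<mu> \<in> \<Theta>"
  show "(\<lambda>y. y) \<in> borel_measurable \<mu>" by (rule meas_mu[OF mu]) simp
  have "(\<integral>\<^sup>+ x. ennreal (norm x) \<partial>\<mu>) = (\<integral>\<^sup>+ y. ennreal \<bar>y\<bar> \<partial>\<mu>)" by simp
  also have "\<dots> < \<infinity>" using N1(2)[OF mu] by (rule le_less_trans) simp
  finally show "(\<integral>\<^sup>+ x. ennreal (norm x) \<partial>\<mu>) < \<infinity>" .
qed

lemma int_abs: "\<mu> \<in> \<Theta> \<Longrightarrow> integrable \<mu> (\<lambda>y. \<bar>y\<bar>)"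
  using int_id by auto

lemma abs_int_N1: "\<mu> \<in> \<Theta> \<Longrightarrow> integral\<^sup>L \<mu> (\<lambda>y. \<bar>y\<bar>) \<le> N1"
proof -
  assume mu: "\<mu> \<in> \<Theta>"
  have "ennreal (integral\<^sup>L \<mu> (\<lambda>y. \<bar>y\<bar>)) = (\<integral>\<^sup>+ y. ennreal \<bar>y\<bar> \<partial>\<mu>)"
    by (rule nn_integral_eq_integral[symmetric]) (auto intro: int_abs[OF mu])
  then show ?thesis using N1(2)[OF mu] N1(1) by (simp add: ennreal_le_iff[symmetric] del: ennreal_le_iff)
qed

definition M1 where "M1 = sublin_E \<Theta> (\<lambda>y. \<bar>y\<bar>)"

lemma abs_int_M1: "\<mu> \<in> \<Theta> \<Longrightarrow> integral\<^sup>L \<mu> (\<lambda>y. \<bar>y\<bar>) \<le> M1"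
  unfolding M1_def by (rule E_ge[OF _ abs_int_N1])

lemma M1_nn: "M1 \<ge> 0"
proof -
  obtain \<mu> where "\<mu> \<in> \<Theta>" using Theta_ne by auto
  moreover have "0 \<le> integral\<^sup>L \<mu> (\<lambda>y. \<bar>y\<bar>)" by (rule Bochner_Integration.integral_nonneg) simp
  ultimately show ?thesis using abs_int_M1[of \<mu>] by linarith
qed

definition mean :: "real measure \<Rightarrow> real" where "mean \<mu> = integral\<^sup>L \<mu> (\<lambda>y. y)"

lemma mean_abs: "\<mu> \<in> \<Theta> \<Longrightarrow> \<bar>mean \<mu>\<bar> \<le> M1"
  using integral_abs_bound[of \<mu> "\<lambda>y. y"] abs_int_M1[of \<mu>] unfolding mean_def by linarith

definition pp :: "real \<Rightarrow> real" where "pp a = sublin_E \<Theta> (\<lambda>y. a * y)"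

lemma int_mult: "integral\<^sup>L \<mu> (\<lambda>y. (a::real) * y) = a * mean \<mu>"
  unfolding mean_def using integral_mult_right_zero[of \<mu> a "\<lambda>y. y"] by simp

lemma pp_ge: "\<mu> \<in> \<Theta> \<Longrightarrow> a * mean \<mu> \<le> pp a"
proof -
  assume mu: "\<mu> \<in> \<Theta>"
  have "\<And>\<nu>. \<nu> \<in> \<Theta> \<Longrightarrow> integral\<^sup>L \<nu> (\<lambda>y. a * y) \<le> \<bar>a\<bar> * M1"
  proof -
    fix \<nu> assume nu: "\<nu> \<in> \<Theta>"
    have "a * mean \<nu> \<le> \<bar>a\<bar> * \<bar>mean \<nu>\<bar>" by (metis abs_ge_self abs_mult)
    also have "\<dots> \<le> \<bar>a\<bar> * M1" using mean_abs[OF nu] by (intro mult_left_mono) auto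
    finally show "integral\<^sup>L \<nu> (\<lambda>y. a * y) \<le> \<bar>a\<bar> * M1" by (simp only: int_mult)
  qed
  from E_ge[OF mu this] show ?thesis unfolding pp_def int_mult .
qed

lemma pp_least: "(\<And>\<mu>. \<mu> \<in> \<Theta> \<Longrightarrow> a * mean \<mu> \<le> c) \<Longrightarrow> pp a \<le> c"
  unfolding pp_def by (rule E_le) (simp only: int_mult)

lemma pp_lip: "pp a \<le> pp b + \<bar>a - b\<bar> * M1"
proof (rule pp_least)
  fix \<mu> assume mu: "\<mu> \<in> \<Theta>"
  have "a * mean \<mu> = b * mean \<mu> + (a - b) * mean \<mu>" by (simp add: algebra_simps)
  also have "\<dots> \<le> pp b + \<bar>a - b\<bar> * M1"
  proof (rule add_mono)
    show "b * mean \<mu> \<le> pp b" using pp_ge[OF mu] .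
    have "(a - b) * mean \<mu> \<le> \<bar>a - b\<bar> * \<bar>mean \<mu>\<bar>" by (metis abs_ge_self abs_mult)
    also have "\<dots> \<le> \<bar>a - b\<bar> * M1" using mean_abs[OF mu] by (intro mult_left_mono) auto
    finally show "(a - b) * mean \<mu> \<le> \<bar>a - b\<bar> * M1" .
  qed
  finally show "a * mean \<mu> \<le> pp b + \<bar>a - b\<bar> * M1" .
qed

lemma pp_lip_abs: "\<bar>pp a - pp b\<bar> \<le> M1 * \<bar>a - b\<bar>"
  using pp_lip[of a b] pp_lip[of b a] by (simp add: abs_minus_commute mult.commute)

lemma pp_bound: "\<bar>pp a\<bar> \<le> M1 * \<bar>a\<bar>"
proof -
  have "pp 0 = 0"
  proof -
    have "pp 0 \<le> 0" by (rule pp_least) simp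
    moreover obtain \<mu> where "\<mu> \<in> \<Theta>" using Theta_ne by auto
    then have "0 \<le> pp 0" using pp_ge[of \<mu> 0] by simp
    ultimately show ?thesis by simp
  qed
  then show ?thesis using pp_lip_abs[of a 0] by simp
qed

lemma cont_pp: "continuous_on UNIV pp"
proof -
  have "\<And>x y. \<bar>pp x - pp y\<bar> \<le> M1 * \<bar>x - y\<bar> powr 1" using pp_lip_abs by simp
  then show ?thesis using holder_cont[of 1 pp M1] by simp
qed

lemma tail:
  assumes e: "e > 0"
  shows "\<exists>N\<ge>1. \<forall>\<mu>\<in>\<Theta>. integral\<^sup>L \<mu> (\<lambda>y. \<bar>y\<bar> * indicator {y. \<bar>y\<bar> > N} y) \<le> e"
proof -
  obtain N where N: "N \<ge> 1" "T N < ennreal e" using T_small[OF e] by auto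
  show ?thesis
  proof (intro exI[of _ N] conjI ballI N(1))
    fix \<mu> assume mu: "\<mu> \<in> \<Theta>"
    have int: "integrable \<mu> (\<lambda>y. \<bar>y\<bar> * indicator {y. \<bar>y\<bar> > N} y)"
      by (rule int_bound[OF mu _ _ int_id[OF mu], of _ 0 1]) (auto simp: indicator_def)
    have "ennreal (integral\<^sup>L \<mu> (\<lambda>y. \<bar>y\<bar> * indicator {y. \<bar>y\<bar> > N} y))
        = (\<integral>\<^sup>+ x. ennreal (\<bar>x\<bar> * indicator {y. \<bar>y\<bar> > N} x) \<partial>\<mu>)"
      by (rule nn_integral_eq_integral[symmetric, OF int]) auto
    also have "\<dots> < ennreal e" using nn_le_T[OF mu] N(2) by (rule le_less_trans)
    finally show "integral\<^sup>L \<mu> (\<lambda>y. \<bar>y\<bar> * indicator {y. \<bar>y\<bar> > N} y) \<le> e"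
      using e by (simp add: ennreal_less_iff)
  qed
qed

end

lemma step_mono:
  fixes \<Psi> :: "real \<Rightarrow> real"
  assumes ab: "a \<le> b" and cont: "continuous_on {a..b} \<Psi>"
    and step: "\<And>r. a < r \<Longrightarrow> r < b \<Longrightarrow> \<exists>\<eta>>0. \<forall>h. 0 < h \<longrightarrow> h < \<eta> \<longrightarrow> \<Psi> (r + h) \<le> \<Psi> r"
  shows "\<Psi> b \<le> \<Psi> a"
proof (rule field_le_epsilon)
  fix e :: real assume e: "0 < e"
  define c where "c = \<Psi> a + e"
  have c: "\<Psi> a < c" using e by (simp add: c_def)
  define S where "S = {x \<in> {a..b}. \<forall>y\<in>{a..x}. \<Psi> y \<le> c}"
  have aS: "a \<in> S" using ab c by (auto simp: S_def)
  have bddS: "bdd_above S" by (rule bdd_aboveI[of _ b]) (auto simp: S_def)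
  define s where "s = Sup S"
  have as: "a \<le> s" unfolding s_def using aS bddS by (rule cSup_upper)
  have sb: "s \<le> b" unfolding s_def using aS by (intro cSup_least) (auto simp: S_def)
  have below: "\<Psi> y \<le> c" if "a \<le> y" "y < s" for y
  proof -
    have "y < Sup S" using that(2) s_def by simp
    then obtain x where "x \<in> S" "y < x" using less_cSupD[of S y] aS by auto
    then show ?thesis using that by (auto simp: S_def)
  qed
  have contat: "\<exists>d>0. \<forall>y\<in>{a..b}. \<bar>y - x\<bar> < d \<longrightarrow> \<bar>\<Psi> y - \<Psi> x\<bar> < q"
    if "x \<in> {a..b}" "q > 0" for x q
    using cont that unfolding continuous_on_iff dist_real_def by blast
  have Ps: "\<Psi> s \<le> c"
  proof (rule ccontr)
    assume "\<not> \<Psi> s \<le> c"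
    then have q: "\<Psi> s - c > 0" by simp
    obtain d where d: "d > 0" "\<forall>y\<in>{a..b}. \<bar>y - s\<bar> < d \<longrightarrow> \<bar>\<Psi> y - \<Psi> s\<bar> < \<Psi> s - c"
      using contat[OF _ q] as sb by auto
    show False
    proof (cases "s = a")
      case True then show False using c \<open>\<not> \<Psi> s \<le> c\<close> by simp
    next
      case False
      define y where "y = max a (s - d / 2)"
      have "a \<le> y" "y < s" "\<bar>y - s\<bar> < d" using False as d(1) by (auto simp: y_def)
      then have "\<Psi> y \<le> c" "\<bar>\<Psi> y - \<Psi> s\<bar> < \<Psi> s - c" using below d(2) sb by auto
      then show False by linarith
    qed
  qed
  have sS: "\<forall>y\<in>{a..s}. \<Psi> y \<le> c"
  proof
    fix y assume "y \<in> {a..s}"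
    then have "a \<le> y" "y \<le> s" by auto
    then show "\<Psi> y \<le> c" using below Ps by (cases "y = s") auto
  qed
  have "s = b"
  proof (rule ccontr)
    assume "s \<noteq> b"
    then have sb': "s < b" using sb by simp
    obtain \<eta> where eta: "\<eta> > 0" "\<forall>y. s < y \<longrightarrow> y < s + \<eta> \<longrightarrow> \<Psi> y \<le> c"
    proof (cases "s = a")
      case True
      obtain d where d: "d > 0" "\<forall>y\<in>{a..b}. \<bar>y - a\<bar> < d \<longrightarrow> \<bar>\<Psi> y - \<Psi> a\<bar> < c - \<Psi> a"
        using contat[of a "c - \<Psi> a"] c ab by auto
      show ?thesis
      proof (rule that[of "min d (b - s)"])
        show "min d (b - s) > 0" using d sb' by simp
        show "\<forall>y. s < y \<longrightarrow> y < s + min d (b - s) \<longrightarrow> \<Psi> y \<le> c"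
        proof (intro allI impI)
          fix y assume "s < y" "y < s + min d (b - s)"
          then have "y \<in> {a..b}" "\<bar>y - a\<bar> < d" using True by auto
          then show "\<Psi> y \<le> c" using d(2) by fastforce
        qed
      qed
    next
      case False
      then have "a < s" using as by simp
      from step[OF this sb'] obtain \<eta> where eta: "\<eta> > 0" "\<forall>h. 0 < h \<longrightarrow> h < \<eta> \<longrightarrow> \<Psi> (s + h) \<le> \<Psi> s"
        by auto
      show ?thesis
      proof (rule that[of \<eta>])
        show "\<forall>y. s < y \<longrightarrow> y < s + \<eta> \<longrightarrow> \<Psi> y \<le> c"
        proof (intro allI impI)
          fix y assume "s < y" "y < s + \<eta>"
          then have "\<Psi> (s + (y - s)) \<le> \<Psi> s" using eta(2)[rule_format, of "y - s"] by linarith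
          then show "\<Psi> y \<le> c" using Ps by simp
        qed
      qed (use eta in auto)
    qed
    obtain m where m: "0 < m" "m \<le> b - s" "m \<le> \<eta>" using eta(1) sb'
      by (intro that[of "min \<eta> (b - s)"]) auto
    define x where "x = s + m / 2"
    have x: "s < x" "x \<le> b" "x < s + \<eta>" using m unfolding x_def by linarith+
    have "x \<in> S"
      unfolding S_def using x as sS eta(2) by (auto simp: not_le intro: less_imp_le)
    then have "x \<le> s" unfolding s_def using bddS by (rule cSup_upper)
    then show False using x by simp
  qed
  then show "\<Psi> b \<le> \<Psi> a + e" using Ps by (simp add: c_def)
qed

lemma dini_int:
  fixes \<Phi> H :: "real \<Rightarrow> real"
  assumes ab: "a \<le> b" and cont: "continuous_on {a..b} \<Phi>" and int: "H integrable_on {a..b}"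
    and lsc: "\<And>r e. a < r \<Longrightarrow> r < b \<Longrightarrow> e > 0 \<Longrightarrow> \<exists>d>0. \<forall>s. a < s \<longrightarrow> s < b \<longrightarrow> \<bar>s - r\<bar> < d \<longrightarrow> H r - e < H s"
    and dini: "\<And>r e. a < r \<Longrightarrow> r < b \<Longrightarrow> e > 0 \<Longrightarrow> \<exists>\<eta>>0. \<forall>h. 0 < h \<longrightarrow> h < \<eta> \<longrightarrow> \<Phi> (r + h) - \<Phi> r \<le> h * (H r + e)"
  shows "\<Phi> b - \<Phi> a \<le> integral {a..b} H"
proof (rule field_le_epsilon)
  fix e0 :: real assume e0: "e0 > 0"
  define e where "e = e0 / (b - a + 1)"
  have e: "e > 0" using e0 ab by (simp add: e_def)
  define \<Psi> where "\<Psi> x = \<Phi> x - integral {a..x} H - e * x" for x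
  have "continuous_on {a..b} \<Psi>"
    unfolding \<Psi>_def by (intro continuous_intros cont indefinite_integral_continuous_1 int)
  then have "\<Psi> b \<le> \<Psi> a"
  proof (rule step_mono[OF ab])
    fix r assume r: "a < r" "r < b"
    obtain \<eta>1 where eta1: "\<eta>1 > 0" "\<forall>h. 0 < h \<longrightarrow> h < \<eta>1 \<longrightarrow> \<Phi> (r + h) - \<Phi> r \<le> h * (H r + e / 2)"
      using dini[OF r, of "e/2"] e by auto
    obtain d where d: "d > 0" "\<forall>s. a < s \<longrightarrow> s < b \<longrightarrow> \<bar>s - r\<bar> < d \<longrightarrow> H r - e / 2 < H s"
      using lsc[OF r, of "e/2"] e by auto
    show "\<exists>\<eta>>0. \<forall>h. 0 < h \<longrightarrow> h < \<eta> \<longrightarrow> \<Psi> (r + h) \<le> \<Psi> r"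
    proof (intro exI[of _ "min \<eta>1 (min d (b - r))"] conjI allI impI)
      show "min \<eta>1 (min d (b - r)) > 0" using eta1 d r by simp
      fix h assume h: "0 < h" "h < min \<eta>1 (min d (b - r))"
      have intr: "H integrable_on {r..r + h}"
        by (rule integrable_subinterval_real[OF int]) (use r h in auto)
      have comb: "integral {a..r} H + integral {r..r + h} H = integral {a..r + h} H"
        by (rule Henstock_Kurzweil_Integration.integral_combine) (use r h in \<open>auto intro: integrable_subinterval_real[OF int]\<close>)
      have "integral {r..r + h} (\<lambda>s. H r - e / 2) \<le> integral {r..r + h} H"
      proof (rule integral_le[OF _ intr])
        show "(\<lambda>s. H r - e / 2) integrable_on {r..r + h}" by (rule integrable_const_ivl)
        fix s assume "s \<in> {r..r + h}"
        then show "H r - e / 2 \<le> H s" using d(2)[rule_format, of s] r h by (auto intro: less_imp_le)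
      qed
      then have lo: "h * (H r - e / 2) \<le> integral {r..r + h} H" using h by simp
      have "\<Phi> (r + h) - \<Phi> r \<le> h * (H r + e / 2)" using eta1 h by auto
      then show "\<Psi> (r + h) \<le> \<Psi> r" unfolding \<Psi>_def using lo comb
        by (simp add: algebra_simps)
    qed
  qed
  then have "\<Phi> b - \<Phi> a \<le> integral {a..b} H + e * (b - a)" by (simp add: \<Psi>_def algebra_simps)
  also have "e * (b - a) \<le> e0"
  proof -
    have "e * (b - a) = e0 * ((b - a) / (b - a + 1))" by (simp add: e_def)
    also have "\<dots> \<le> e0 * 1" using e0 ab by (intro mult_left_mono) auto
    finally show ?thesis by simp
  qed
  finally show "\<Phi> b - \<Phi> a \<le> integral {a..b} H + e0" by simp
qed

lemma holder_cont_on: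
  fixes g :: "real \<Rightarrow> real"
  assumes "0 < a" and h: "\<And>x y. x \<in> S \<Longrightarrow> y \<in> S \<Longrightarrow> \<bar>g x - g y\<bar> \<le> c * \<bar>x - y\<bar> powr a"
  shows "continuous_on S g"
  unfolding continuous_on_def
proof (intro ballI)
  fix x assume x: "x \<in> S"
  have "((\<lambda>y. g y - g x) \<longlongrightarrow> 0) (at x within S)"
  proof (rule Lim_null_comparison)
    show "\<forall>\<^sub>F y in at x within S. norm (g y - g x) \<le> c * \<bar>y - x\<bar> powr a"
      using h x by (auto simp: eventually_at_filter)
    have "((\<lambda>y. \<bar>y - x\<bar> powr a) \<longlongrightarrow> 0) (at x within S)"
      by (rule tendsto_zero_powrI) (auto intro!: tendsto_eq_intros simp: assms)
    then show "((\<lambda>y. c * \<bar>y - x\<bar> powr a) \<longlongrightarrow> 0) (at x within S)"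
      using tendsto_mult_right_zero by blast
  qed
  then show "(g \<longlongrightarrow> g x) (at x within S)" by (simp add: LIM_zero_iff)
qed

lemma lsc_meas:
  fixes K :: "real \<Rightarrow> real"
  assumes S: "S \<in> sets lebesgue"
    and lsc: "\<And>w a. w \<in> S \<Longrightarrow> a < K w \<Longrightarrow> \<exists>d>0. \<forall>w'\<in>S. \<bar>w' - w\<bar> < d \<longrightarrow> a < K w'"
  shows "K \<in> borel_measurable (lebesgue_on S)"
proof (subst borel_measurable_iff_greater, intro allI)
  fix a
  define A where "A = {w \<in> S. a < K w}"
  have "\<forall>w\<in>A. \<exists>d>0. \<forall>w'\<in>S. \<bar>w' - w\<bar> < d \<longrightarrow> a < K w'" using lsc by (auto simp: A_def)
  then obtain d where d: "\<forall>w\<in>A. d w > 0 \<and> (\<forall>w'\<in>S. \<bar>w' - w\<bar> < d w \<longrightarrow> a < K w')" by metis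
  define U where "U = (\<Union>w\<in>A. ball w (d w))"
  have U: "open U" by (auto simp: U_def)
  have AU: "A = S \<inter> U"
  proof
    show "A \<subseteq> S \<inter> U" using d by (auto simp: A_def U_def)
    show "S \<inter> U \<subseteq> A" using d by (auto simp: A_def U_def dist_real_def abs_minus_commute)
  qed
  have "U \<in> sets lebesgue" using U by (simp add: borel_open)
  then have "S \<inter> U \<in> sets lebesgue" using S by auto
  then show "{w \<in> space (lebesgue_on S). a < K w} \<in> sets (lebesgue_on S)"
    using S AU by (simp add: A_def sets_restrict_space_iff)
qed

context P33 begin

lemma meas1: "\<mu> \<in> \<Theta> \<Longrightarrow> Sigma_Algebra.measure \<mu> (space \<mu>) = 1"
  using prob_space.prob_space[OF prob] by simp

lemma int_const: "\<mu> \<in> \<Theta> \<Longrightarrow> integral\<^sup>L \<mu> (\<lambda>y. c) = (c::real)"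
proof -
  assume mu: "\<mu> \<in> \<Theta>"
  show ?thesis using prob_space.prob_space[OF prob[OF mu]] by simp
qed

lemma i_const: "\<mu> \<in> \<Theta> \<Longrightarrow> integrable \<mu> (\<lambda>y. c::real)"
proof -
  assume mu: "\<mu> \<in> \<Theta>"
  interpret prob_space \<mu> using prob[OF mu] .
  show ?thesis by simp
qed

lemma int_le_gen:
  fixes f1 f2 w :: "real \<Rightarrow> real"
  assumes mu: "\<mu> \<in> \<Theta>" and i: "integrable \<mu> f1" "integrable \<mu> f2" "integrable \<mu> w"
    and le: "\<And>y. f1 y \<le> f2 y + k * w y"
  shows "integral\<^sup>L \<mu> f1 \<le> integral\<^sup>L \<mu> f2 + k * integral\<^sup>L \<mu> w"
proof -
  have "integral\<^sup>L \<mu> f1 \<le> integral\<^sup>L \<mu> (\<lambda>y. f2 y + k * w y)"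
    by (rule Bochner_Integration.integral_mono) (use i le in auto)
  also have "\<dots> = integral\<^sup>L \<mu> f2 + k * integral\<^sup>L \<mu> w" using i by simp
  finally show ?thesis .
qed

lemma int_abs_gen:
  fixes f1 f2 w :: "real \<Rightarrow> real"
  assumes mu: "\<mu> \<in> \<Theta>" and i: "integrable \<mu> f1" "integrable \<mu> f2" "integrable \<mu> w"
    and le: "\<And>y. \<bar>f1 y - f2 y\<bar> \<le> k * w y"
  shows "\<bar>integral\<^sup>L \<mu> f1 - integral\<^sup>L \<mu> f2\<bar> \<le> k * integral\<^sup>L \<mu> w"
proof -
  have l1: "f1 y \<le> f2 y + k * w y" and l2: "f2 y \<le> f1 y + k * w y" for y
    using le[of y] unfolding abs_le_iff by linarith+
  have "integral\<^sup>L \<mu> f1 \<le> integral\<^sup>L \<mu> f2 + k * integral\<^sup>L \<mu> w"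
    by (rule int_le_gen[OF mu i l1])
  moreover have "integral\<^sup>L \<mu> f2 \<le> integral\<^sup>L \<mu> f1 + k * integral\<^sup>L \<mu> w"
    by (rule int_le_gen[OF mu i(2,1,3) l2])
  ultimately show ?thesis by linarith
qed

lemma int_close:
  fixes f1 f2 w :: "real \<Rightarrow> real"
  assumes mu: "\<mu> \<in> \<Theta>" and i: "integrable \<mu> f1" "integrable \<mu> f2"
    and le: "\<And>y. \<bar>f1 y - f2 y\<bar> \<le> k * w y" and k: "k \<ge> 0"
    and w: "k = 0 \<or> (integrable \<mu> w \<and> integral\<^sup>L \<mu> w \<le> M)"
  shows "\<bar>integral\<^sup>L \<mu> f1 - integral\<^sup>L \<mu> f2\<bar> \<le> k * M"
  using w
proof
  assume "k = 0"
  have "f1 x = f2 x" for x using le[of x] \<open>k = 0\<close> by simp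
  then have "f1 = f2" by auto
  then show ?thesis using \<open>k = 0\<close> by simp
next
  assume w: "integrable \<mu> w \<and> integral\<^sup>L \<mu> w \<le> M"
  have "\<bar>integral\<^sup>L \<mu> f1 - integral\<^sup>L \<mu> f2\<bar> \<le> k * integral\<^sup>L \<mu> w"
    using int_abs_gen[OF mu i] w le by blast
  also have "\<dots> \<le> k * M" using w k by (intro mult_left_mono) auto
  finally show ?thesis .
qed

lemma int_1y: "\<mu> \<in> \<Theta> \<Longrightarrow> integrable \<mu> (\<lambda>y. 1 + \<bar>y\<bar>) \<and> integral\<^sup>L \<mu> (\<lambda>y. 1 + \<bar>y\<bar>) \<le> 1 + M1"
proof -
  assume mu: "\<mu> \<in> \<Theta>"
  have i: "integrable \<mu> (\<lambda>y. 1 + \<bar>y\<bar>)" using int_abs[OF mu] i_const[OF mu] by simp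
  have "integral\<^sup>L \<mu> (\<lambda>y. 1 + \<bar>y\<bar>) = 1 + integral\<^sup>L \<mu> (\<lambda>y. \<bar>y\<bar>)"
    using int_abs[OF mu] i_const[OF mu] meas1[OF mu] by (simp add: Bochner_Integration.integral_add)
  then show ?thesis using i abs_int_M1[OF mu] by simp
qed

lemma int_bdd:
  fixes f :: "real \<Rightarrow> real"
  assumes mu: "\<mu> \<in> \<Theta>" and i: "integrable \<mu> f" and b: "\<And>y. \<bar>f y\<bar> \<le> c"
  shows "\<bar>integral\<^sup>L \<mu> f\<bar> \<le> c"
  using int_abs_gen[OF mu i i_const[OF mu] i_const[OF mu], of 0 1 c] b meas1[OF mu] by simp

lemma cont_comp: "continuous_on UNIV h \<Longrightarrow> continuous_on UNIV (\<lambda>y::real. (h (c * y))::real)"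
  by (rule continuous_on_compose2[OF _ continuous_on_mult_left[OF continuous_on_id]]) auto

lemma cont_pvx: "r \<ge> 0 \<Longrightarrow> continuous_on UNIV (\<lambda>x. pp (vx x r))"
  by (rule continuous_on_compose2[OF cont_pp cont_vx]) auto

definition FF where "FF x r = vt x r - pp (vx x r)"

lemma cont_FF: "r \<ge> 0 \<Longrightarrow> continuous_on UNIV (\<lambda>x. FF x r)"
  unfolding FF_def by (intro continuous_intros cont_vt cont_pvx)

lemma m_v: "r \<ge> 0 \<Longrightarrow> (\<lambda>y. v (c * y) r) \<in> borel_measurable borel"
  by (intro borel_measurable_continuous_onI cont_comp cont_v)
lemma m_vx: "r \<ge> 0 \<Longrightarrow> (\<lambda>y. vx (c * y) r) \<in> borel_measurable borel"
  by (intro borel_measurable_continuous_onI cont_comp cont_vx)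
lemma m_vt: "r \<ge> 0 \<Longrightarrow> (\<lambda>y. vt (c * y) r) \<in> borel_measurable borel"
  by (intro borel_measurable_continuous_onI cont_comp cont_vt)
lemma m_pvx: "r \<ge> 0 \<Longrightarrow> (\<lambda>y. pp (vx (c * y) r)) \<in> borel_measurable borel"
  by (intro borel_measurable_continuous_onI cont_comp cont_pvx)
lemma m_FF: "r \<ge> 0 \<Longrightarrow> (\<lambda>y. FF (c * y) r) \<in> borel_measurable borel"
  by (intro borel_measurable_continuous_onI cont_comp cont_FF)

lemma i_v: "\<mu> \<in> \<Theta> \<Longrightarrow> r \<ge> 0 \<Longrightarrow> integrable \<mu> (\<lambda>y. v (c * y) r)"
  by (rule int_bound[OF _ m_v _ int_id, of _ _ _ Bc 0]) (auto intro: Bv)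
lemma i_vt: "\<mu> \<in> \<Theta> \<Longrightarrow> r \<ge> 0 \<Longrightarrow> integrable \<mu> (\<lambda>y. vt (c * y) r)"
  by (rule int_bound[OF _ m_vt _ int_id, of _ _ _ Bc 0]) (auto intro: Bvt)
lemma i_yvx: "\<mu> \<in> \<Theta> \<Longrightarrow> r \<ge> 0 \<Longrightarrow> integrable \<mu> (\<lambda>y. y * vx (c * y) r)"
proof (rule int_bound[OF _ _ _ int_id, of _ _ 0 Bc])
  assume r: "r \<ge> 0"
  show "(\<lambda>y. y * vx (c * y) r) \<in> borel_measurable borel" using m_vx[OF r] by measurable
  fix y show "\<bar>y * vx (c * y) r\<bar> \<le> 0 + Bc * \<bar>y\<bar>"
    using Bvx[OF r, of "c * y"] by (simp add: abs_mult mult.commute mult_left_mono)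
qed
lemma i_pvx: "\<mu> \<in> \<Theta> \<Longrightarrow> r \<ge> 0 \<Longrightarrow> integrable \<mu> (\<lambda>y. pp (vx (c * y) r))"
proof (rule int_bound[OF _ m_pvx _ int_id, of _ _ _ "M1 * Bc" 0])
  fix y assume r: "r \<ge> 0"
  show "\<bar>pp (vx (c * y) r)\<bar> \<le> M1 * Bc + 0 * \<bar>y\<bar>"
  proof -
    have "\<bar>pp (vx (c * y) r)\<bar> \<le> M1 * \<bar>vx (c * y) r\<bar>" by (rule pp_bound)
    also have "\<dots> \<le> M1 * Bc" using Bvx[OF r, of "c * y"] M1_nn by (intro mult_left_mono)
    finally show ?thesis by simp
  qed
qed
lemma i_FF: "\<mu> \<in> \<Theta> \<Longrightarrow> r \<ge> 0 \<Longrightarrow> integrable \<mu> (\<lambda>y. FF (c * y) r)"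
  unfolding FF_def using i_vt i_pvx by auto
lemma i_mFF: "\<mu> \<in> \<Theta> \<Longrightarrow> r \<ge> 0 \<Longrightarrow> integrable \<mu> (\<lambda>y. - FF (c * y) r)"
  using i_FF by auto

lemma powr_le1p: "0 \<le> x \<Longrightarrow> x powr \<alpha> \<le> 1 + x"
proof (cases "x \<le> 1")
  case True
  assume "0 \<le> x"
  then have "x powr \<alpha> \<le> 1" using True alpha by (simp add: powr_le1)
  then show ?thesis using \<open>0 \<le> x\<close> by simp
next
  case False
  then have "x powr \<alpha> \<le> x powr 1" using alpha by (intro powr_mono) auto
  then show ?thesis using False by simp
qed

lemma i_pa: "\<mu> \<in> \<Theta> \<Longrightarrow> integrable \<mu> (\<lambda>y. \<bar>y\<bar> powr \<alpha>)"
  by (rule int_bound[OF _ _ _ int_id, of _ _ 1 1]) (auto intro: powr_le1p)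

lemma FF_bound: "r \<ge> 0 \<Longrightarrow> \<bar>FF x r\<bar> \<le> Bc + M1 * Bc"
proof -
  assume r: "r \<ge> 0"
  have "\<bar>pp (vx x r)\<bar> \<le> M1 * \<bar>vx x r\<bar>" by (rule pp_bound)
  also have "\<dots> \<le> M1 * Bc" using Bvx[OF r, of x] M1_nn by (intro mult_left_mono)
  finally have "\<bar>pp (vx x r)\<bar> \<le> M1 * Bc" .
  then show ?thesis using Bvt[OF r, of x] unfolding FF_def by linarith
qed

definition gg where "gg tb \<mu> r = integral\<^sup>L \<mu> (\<lambda>y. v ((tb - r) * y) r)"
definition psi where "psi tb r = sublin_E \<Theta> (\<lambda>y. v ((tb - r) * y) r)"

lemma gg_bdd: "\<mu> \<in> \<Theta> \<Longrightarrow> r \<ge> 0 \<Longrightarrow> \<bar>gg tb \<mu> r\<bar> \<le> Bc"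
  unfolding gg_def by (rule int_bdd[OF _ i_v]) (auto intro: Bv)

lemma v_path_lip:
  assumes r: "r \<ge> 0" "r' \<ge> 0"
  shows "\<bar>v ((tb - r) * y) r - v ((tb - r') * y) r'\<bar> \<le> Bc * \<bar>r - r'\<bar> * (1 + \<bar>y\<bar>)"
proof -
  have "\<bar>v ((tb - r) * y) r - v ((tb - r') * y) r\<bar> \<le> Bc * \<bar>(tb - r) * y - (tb - r') * y\<bar>"
    using v_lip_x[OF r(1)] by (simp add: abs_minus_commute)
  also have "\<bar>(tb - r) * y - (tb - r') * y\<bar> = \<bar>r - r'\<bar> * \<bar>y\<bar>"
    by (simp add: abs_mult[symmetric] algebra_simps abs_minus_commute)
  finally have 1: "\<bar>v ((tb - r) * y) r - v ((tb - r') * y) r\<bar> \<le> Bc * (\<bar>r - r'\<bar> * \<bar>y\<bar>)" .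
  have 2: "\<bar>v ((tb - r') * y) r - v ((tb - r') * y) r'\<bar> \<le> Bc * \<bar>r - r'\<bar>"
    using v_lip_t[OF r(2) r(1)] by simp
  have "\<bar>v ((tb - r) * y) r - v ((tb - r') * y) r'\<bar> \<le> Bc * (\<bar>r - r'\<bar> * \<bar>y\<bar>) + Bc * \<bar>r - r'\<bar>"
    using 1 2 by linarith
  also have "\<dots> = Bc * \<bar>r - r'\<bar> * (1 + \<bar>y\<bar>)" by (simp add: algebra_simps)
  finally show ?thesis .
qed

lemma gg_lip:
  assumes mu: "\<mu> \<in> \<Theta>" and r: "r \<ge> 0" "r' \<ge> 0"
  shows "\<bar>gg tb \<mu> r - gg tb \<mu> r'\<bar> \<le> Bc * (1 + M1) * \<bar>r - r'\<bar>"
proof -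
  have "\<bar>gg tb \<mu> r - gg tb \<mu> r'\<bar> \<le> (Bc * \<bar>r - r'\<bar>) * integral\<^sup>L \<mu> (\<lambda>y. 1 + \<bar>y\<bar>)"
    unfolding gg_def
    by (rule int_abs_gen[OF mu i_v[OF mu r(1)] i_v[OF mu r(2)]]) (use int_1y[OF mu] v_path_lip[OF r] in auto)
  also have "\<dots> \<le> (Bc * \<bar>r - r'\<bar>) * (1 + M1)"
    using int_1y[OF mu] Bc_nn by (intro mult_left_mono) auto
  finally show ?thesis by (simp add: algebra_simps)
qed

lemma psi_le:
  assumes r: "r \<ge> 0" "r' \<ge> 0"
  shows "psi tb r \<le> psi tb r' + Bc * (1 + M1) * \<bar>r - r'\<bar>"
  unfolding psi_def
proof (rule E_mono)
  fix \<nu> assume nu: "\<nu> \<in> \<Theta>"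
  show "integral\<^sup>L \<nu> (\<lambda>y. v ((tb - r') * y) r') \<le> Bc" using gg_bdd[OF nu r(2), of tb] by (simp add: gg_def abs_le_iff)
  show "integral\<^sup>L \<nu> (\<lambda>y. v ((tb - r) * y) r) \<le> integral\<^sup>L \<nu> (\<lambda>y. v ((tb - r') * y) r') + Bc * (1 + M1) * \<bar>r - r'\<bar>"
    using gg_lip[OF nu r, of tb] by (simp add: gg_def)
qed

lemma psi_lip: "r \<ge> 0 \<Longrightarrow> r' \<ge> 0 \<Longrightarrow> \<bar>psi tb r - psi tb r'\<bar> \<le> Bc * (1 + M1) * \<bar>r - r'\<bar>"
  using psi_le[of r r' tb] psi_le[of r' r tb] by (simp add: abs_minus_commute)

lemma psi_cont: "continuous_on {0..} (psi tb)"
  by (rule holder_cont_on[where a=1 and c="Bc * (1 + M1)"]) (use psi_lip in auto)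

lemma psi_tb: "tb \<ge> 0 \<Longrightarrow> psi tb tb = v 0 tb"
proof -
  have "\<And>\<mu>. \<mu> \<in> \<Theta> \<Longrightarrow> integral\<^sup>L \<mu> (\<lambda>y. v ((tb - tb) * y) tb) = v 0 tb" using meas1 by simp
  then have "sublin_E \<Theta> (\<lambda>y. v ((tb - tb) * y) tb) = (SUP \<mu>\<in>\<Theta>. v 0 tb)"
    unfolding sublin_E_def by (rule SUP_cong[OF refl])
  then show ?thesis using Theta_ne by (simp add: psi_def)
qed

lemma gg_le_psi: "\<mu> \<in> \<Theta> \<Longrightarrow> r \<ge> 0 \<Longrightarrow> gg tb \<mu> r \<le> psi tb r"
  unfolding psi_def gg_def by (rule E_ge[where c=Bc]) (use gg_bdd[unfolded gg_def] in \<open>auto simp: abs_le_iff\<close>)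

end

context P33 begin

lemma rem_point:
  assumes r: "r \<ge> 0" and h: "h > 0" and N: "N \<ge> 1"
  shows "\<bar>v ((lam - h) * y) (r + h) - v (lam * y) r - h * (- y * vx (lam * y) r + vt (lam * y) r)\<bar>
         \<le> 3 * Cc * N^2 * h * h powr \<alpha> + 4 * Bc * h * (\<bar>y\<bar> * indicator {y. \<bar>y\<bar> > N} y)"
proof -
  define x where "x = lam * y"
  define x' where "x' = (lam - h) * y"
  have xx: "\<bar>x' - x\<bar> = h * \<bar>y\<bar>" using h by (simp add: x_def x'_def algebra_simps abs_mult)
  have rh: "r + h \<ge> 0" using r h by simp
  define T1 where "T1 = v x' (r + h) - v x' r - h * vt x' r"
  define T2 where "T2 = h * (vt x' r - vt x r)"
  define T3 where "T3 = v x' r - v x r - (x' - x) * vx x r"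
  have eq: "v x' (r + h) - v x r - h * (- y * vx x r + vt x r) = T1 + T2 + T3"
    using h by (simp add: T1_def T2_def T3_def x_def x'_def algebra_simps)
  have hy: "(h * \<bar>y\<bar>) powr \<alpha> = h powr \<alpha> * \<bar>y\<bar> powr \<alpha>" using h by (simp add: powr_mult)
  have t1: "\<bar>T1\<bar> \<le> h * (Cc * h powr \<alpha>)"
  proof -
    have "\<bar>v x' (r + h) - v x' r - (r + h - r) * vt x' r\<bar> \<le> (r + h - r) * (Cc * h powr \<alpha>)"
    proof (rule v_dev_t)
      fix z assume z: "r \<le> z" "z \<le> r + h"
      have "\<bar>vt x' z - vt x' r\<bar> \<le> Cc * (\<bar>x' - x'\<bar> + \<bar>z - r\<bar>) powr \<alpha>" using Cvt[of z r x' x'] z r by simp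
      also have "\<dots> \<le> Cc * h powr \<alpha>" using z alpha Cc_nn by (intro mult_left_mono powr_mono2) auto
      finally show "\<bar>vt x' z - vt x' r\<bar> \<le> Cc * h powr \<alpha>" .
    qed (use r h in auto)
    then show ?thesis by (simp add: T1_def)
  qed
  have t2: "\<bar>T2\<bar> \<le> h * (Cc * h powr \<alpha> * \<bar>y\<bar> powr \<alpha>)"
  proof -
    have "\<bar>vt x' r - vt x r\<bar> \<le> Cc * (\<bar>x' - x\<bar> + \<bar>r - r\<bar>) powr \<alpha>" using Cvt[OF r r] .
    also have "\<dots> = Cc * h powr \<alpha> * \<bar>y\<bar> powr \<alpha>" using xx hy by simp
    finally show ?thesis using h by (simp add: T2_def abs_mult mult_left_mono)
  qed
  have t3: "\<bar>T3\<bar> \<le> h * (Cc * h powr \<alpha> * (\<bar>y\<bar> * \<bar>y\<bar> powr \<alpha>))"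
  proof -
    have "\<bar>v x' r - v x r - (x' - x) * vx x r\<bar> \<le> \<bar>x' - x\<bar> * (Cc * (h * \<bar>y\<bar>) powr \<alpha>)"
    proof (rule v_dev_x[OF r])
      fix z assume z: "min x x' \<le> z" "z \<le> max x x'"
      have "\<bar>z - x\<bar> \<le> h * \<bar>y\<bar>" using z xx by (auto simp: min_def max_def split: if_splits)
      have "\<bar>vx z r - vx x r\<bar> \<le> Cc * (\<bar>z - x\<bar> + \<bar>r - r\<bar>) powr \<alpha>" using Cvx[OF r r] .
      also have "\<dots> \<le> Cc * (h * \<bar>y\<bar>) powr \<alpha>"
        using \<open>\<bar>z - x\<bar> \<le> h * \<bar>y\<bar>\<close> alpha Cc_nn by (intro mult_left_mono powr_mono2) auto
      finally show "\<bar>vx z r - vx x r\<bar> \<le> Cc * (h * \<bar>y\<bar>) powr \<alpha>" .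
    qed
    also have "\<dots> = h * (Cc * h powr \<alpha> * (\<bar>y\<bar> * \<bar>y\<bar> powr \<alpha>))" using xx hy by (simp add: algebra_simps)
    finally show ?thesis by (simp add: T3_def)
  qed
  have fine: "\<bar>T1 + T2 + T3\<bar> \<le> h * (Cc * h powr \<alpha>) * (1 + \<bar>y\<bar> powr \<alpha> + \<bar>y\<bar> * \<bar>y\<bar> powr \<alpha>)"
    using t1 t2 t3 by (simp add: algebra_simps) linarith
  have crude: "\<bar>v x' (r + h) - v x r - h * (- y * vx x r + vt x r)\<bar> \<le> 4 * Bc * h * (1 + \<bar>y\<bar>) / 2"
  proof -
    have a1: "\<bar>v x' (r + h) - v x' r\<bar> \<le> Bc * h" using v_lip_t[OF r rh, of x'] h by simp
    have a2: "\<bar>v x' r - v x r\<bar> \<le> Bc * (h * \<bar>y\<bar>)" using v_lip_x[OF r, of x' x] xx by simp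
    have a3: "\<bar>h * (- y * vx x r + vt x r)\<bar> \<le> h * (\<bar>y\<bar> * Bc + Bc)"
    proof -
      have "\<bar>- y * vx x r + vt x r\<bar> \<le> \<bar>y\<bar> * \<bar>vx x r\<bar> + \<bar>vt x r\<bar>" by (simp add: abs_mult[symmetric] abs_triangle_ineq4[of _ "vt x r", simplified] order_trans[OF abs_triangle_ineq])
      also have "\<dots> \<le> \<bar>y\<bar> * Bc + Bc" using Bvx[OF r, of x] Bvt[OF r, of x] by (intro add_mono mult_left_mono) auto
      finally show ?thesis using h by (simp add: abs_mult mult_left_mono)
    qed
    have "\<bar>v x' (r + h) - v x r - h * (- y * vx x r + vt x r)\<bar> \<le> Bc * h + Bc * (h * \<bar>y\<bar>) + h * (\<bar>y\<bar> * Bc + Bc)"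
      using a1 a2 a3 by linarith
    also have "\<dots> = 4 * Bc * h * (1 + \<bar>y\<bar>) / 2" by (simp add: algebra_simps)
    finally show ?thesis .
  qed
  have "\<bar>v x' (r + h) - v x r - h * (- y * vx x r + vt x r)\<bar>
         \<le> 3 * Cc * N^2 * h * h powr \<alpha> + 4 * Bc * h * (\<bar>y\<bar> * indicator {y. \<bar>y\<bar> > N} y)"
  proof (cases "\<bar>y\<bar> > N")
    case True
    have "1 + \<bar>y\<bar> \<le> 2 * \<bar>y\<bar>" using True N by simp
    then have "(4 * Bc * h) * (1 + \<bar>y\<bar>) \<le> (4 * Bc * h) * (2 * \<bar>y\<bar>)" using Bc_nn h by (intro mult_left_mono) auto
    then have "4 * Bc * h * (1 + \<bar>y\<bar>) / 2 \<le> 4 * Bc * h * \<bar>y\<bar>" by simp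
    moreover have "0 \<le> 3 * Cc * N^2 * h * h powr \<alpha>" using Cc_nn h by simp
    moreover have "3 * Cc * N^2 * h * h powr \<alpha> + 4 * Bc * h * (\<bar>y\<bar> * indicator {y. \<bar>y\<bar> > N} y)
       = 3 * Cc * N^2 * h * h powr \<alpha> + 4 * Bc * h * \<bar>y\<bar>" using True by simp
    ultimately show ?thesis using crude by linarith
  next
    case False
    have pa: "\<bar>y\<bar> powr \<alpha> \<le> N"
    proof -
      have "\<bar>y\<bar> powr \<alpha> \<le> N powr \<alpha>" using False alpha by (intro powr_mono2) auto
      also have "\<dots> \<le> N powr 1" using N alpha by (intro powr_mono) auto
      finally show ?thesis using N by simp
    qed
    have "1 + \<bar>y\<bar> powr \<alpha> + \<bar>y\<bar> * \<bar>y\<bar> powr \<alpha> \<le> 1 + N + N * N"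
      using pa False by (intro add_mono mult_mono) auto
    also have "\<dots> \<le> 3 * N^2"
    proof -
      have a: "N \<le> N * N" using N mult_left_mono[of 1 N N] by auto
      then have "1 \<le> N * N" using N by linarith
      note a this
      then show ?thesis by (simp add: power2_eq_square)
    qed
    finally have b: "1 + \<bar>y\<bar> powr \<alpha> + \<bar>y\<bar> * \<bar>y\<bar> powr \<alpha> \<le> 3 * N^2" .
    have "h * (Cc * h powr \<alpha>) * (1 + \<bar>y\<bar> powr \<alpha> + \<bar>y\<bar> * \<bar>y\<bar> powr \<alpha>) \<le> h * (Cc * h powr \<alpha>) * (3 * N^2)"
      using b h Cc_nn by (intro mult_left_mono) auto
    then show ?thesis using fine eq False by (simp add: algebra_simps)
  qed
  then show ?thesis by (simp add: x_def x'_def)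
qed

definition DD where "DD tb r y = - y * vx ((tb - r) * y) r + vt ((tb - r) * y) r"

lemma i_DD: "\<mu> \<in> \<Theta> \<Longrightarrow> r \<ge> 0 \<Longrightarrow> integrable \<mu> (DD tb r)"
proof -
  assume a: "\<mu> \<in> \<Theta>" "r \<ge> 0"
  have "integrable \<mu> (\<lambda>y. - (y * vx ((tb - r) * y) r) + vt ((tb - r) * y) r)"
    using i_yvx[OF a] i_vt[OF a] by auto
  then show ?thesis by (simp add: DD_def[abs_def])
qed

lemma rem_unif:
  assumes e: "e > 0"
  shows "\<exists>\<eta>>0. \<forall>h r \<mu>. 0 < h \<longrightarrow> h < \<eta> \<longrightarrow> 0 \<le> r \<longrightarrow> \<mu> \<in> \<Theta> \<longrightarrow>
     \<bar>gg tb \<mu> (r + h) - gg tb \<mu> r - h * integral\<^sup>L \<mu> (DD tb r)\<bar> \<le> h * e"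
proof -
  define e' where "e' = e / (8 * (Bc + 1))"
  have e': "e' > 0" using e Bc_nn by (simp add: e'_def)
  obtain N where N: "N \<ge> 1" "\<And>\<mu>. \<mu> \<in> \<Theta> \<Longrightarrow> integral\<^sup>L \<mu> (\<lambda>y. \<bar>y\<bar> * indicator {y. \<bar>y\<bar> > N} y) \<le> e'"
    using tail[OF e'] by auto
  define Q where "Q = 6 * Cc * N^2 + 1"
  have "0 \<le> Cc * N^2" using Cc_nn by simp
  then have Q: "Q > 0" "Q \<ge> 6 * Cc * N^2" by (auto simp: Q_def)
  define \<eta> where "\<eta> = (e / Q) powr (1 / \<alpha>)"
  have eta: "\<eta> > 0" using e Q by (simp add: \<eta>_def)
  have etap: "\<eta> powr \<alpha> = e / Q" using e Q alpha by (simp add: \<eta>_def powr_powr)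
  show ?thesis
  proof (intro exI[of _ \<eta>] conjI allI impI eta)
    fix h r :: real and \<mu> assume h: "0 < h" "h < \<eta>" and r: "0 \<le> r" and mu: "\<mu> \<in> \<Theta>"
    have rh: "r + h \<ge> 0" using h r by simp
    define w where "w y = 3 * Cc * N^2 * h * h powr \<alpha> + 4 * Bc * h * (\<bar>y\<bar> * indicator {y. \<bar>y\<bar> > N} y)" for y
    have iind: "integrable \<mu> (\<lambda>y. \<bar>y\<bar> * indicator {y. \<bar>y\<bar> > N} y)"
      by (rule int_bound[OF mu _ _ int_id[OF mu], of _ 0 1]) (auto simp: indicator_def)
    have iw: "integrable \<mu> w" unfolding w_def using iind i_const[OF mu] by auto
    have intw: "integral\<^sup>L \<mu> w = 3 * Cc * N^2 * h * h powr \<alpha> + 4 * Bc * h * integral\<^sup>L \<mu> (\<lambda>y. \<bar>y\<bar> * indicator {y. \<bar>y\<bar> > N} y)"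
      unfolding w_def using iind i_const[OF mu] int_const[OF mu] by simp
    have f1: "integrable \<mu> (\<lambda>y. v ((tb - (r + h)) * y) (r + h) - v ((tb - r) * y) r)"
      using i_v[OF mu rh] i_v[OF mu r] by auto
    have f2: "integrable \<mu> (\<lambda>y. h * DD tb r y)" using i_DD[OF mu r] by auto
    have "\<bar>integral\<^sup>L \<mu> (\<lambda>y. v ((tb - (r + h)) * y) (r + h) - v ((tb - r) * y) r) - integral\<^sup>L \<mu> (\<lambda>y. h * DD tb r y)\<bar>
        \<le> 1 * integral\<^sup>L \<mu> w"
    proof (rule int_abs_gen[OF mu f1 f2 iw])
      fix y
      have e1: "tb - (r + h) = (tb - r) - h" by simp
      show "\<bar>v ((tb - (r + h)) * y) (r + h) - v ((tb - r) * y) r - h * DD tb r y\<bar> \<le> 1 * w y"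
        unfolding e1 using rem_point[OF r h(1) N(1), of "tb - r" y] by (simp add: w_def DD_def)
    qed
    moreover have "integral\<^sup>L \<mu> (\<lambda>y. v ((tb - (r + h)) * y) (r + h) - v ((tb - r) * y) r) = gg tb \<mu> (r + h) - gg tb \<mu> r"
      unfolding gg_def using i_v[OF mu rh] i_v[OF mu r] by simp
    moreover have "integral\<^sup>L \<mu> (\<lambda>y. h * DD tb r y) = h * integral\<^sup>L \<mu> (DD tb r)" by simp
    ultimately have main: "\<bar>gg tb \<mu> (r + h) - gg tb \<mu> r - h * integral\<^sup>L \<mu> (DD tb r)\<bar> \<le> integral\<^sup>L \<mu> w" by simp
    have hp: "h powr \<alpha> \<le> e / Q" using h alpha etap by (metis less_imp_le powr_mono2 less_imp_le[OF h(1)])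
    have p1: "3 * Cc * N^2 * h * h powr \<alpha> \<le> h * (e / 2)"
    proof -
      have "3 * Cc * N^2 * h powr \<alpha> \<le> 3 * Cc * N^2 * (e / Q)" using hp Cc_nn by (intro mult_left_mono) auto
      also have "\<dots> \<le> e / 2" using Q e by (simp add: field_simps)
      finally show ?thesis using h by (simp add: mult.commute mult.left_commute mult_left_mono)
    qed
    have p2: "4 * Bc * h * integral\<^sup>L \<mu> (\<lambda>y. \<bar>y\<bar> * indicator {y. \<bar>y\<bar> > N} y) \<le> h * (e / 2)"
    proof -
      have "4 * Bc * h * integral\<^sup>L \<mu> (\<lambda>y. \<bar>y\<bar> * indicator {y. \<bar>y\<bar> > N} y) \<le> 4 * Bc * h * e'"
        using N(2)[OF mu] Bc_nn h by (intro mult_left_mono) auto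
      also have "\<dots> \<le> h * (e / 2)" using Bc_nn h e by (simp add: e'_def field_simps)
      finally show ?thesis .
    qed
    show "\<bar>gg tb \<mu> (r + h) - gg tb \<mu> r - h * integral\<^sup>L \<mu> (DD tb r)\<bar> \<le> h * e"
      using main intw p1 p2 by simp
  qed
qed

end

context P33 begin

definition MH :: "real \<Rightarrow> bool" where
  "MH M \<longleftrightarrow> (\<forall>\<mu>\<in>\<Theta>. integrable \<mu> (\<lambda>y. \<bar>y\<bar> powr (1 + \<alpha>)) \<and> integral\<^sup>L \<mu> (\<lambda>y. \<bar>y\<bar> powr (1 + \<alpha>)) \<le> M
      \<and> M1 * integral\<^sup>L \<mu> (\<lambda>y. \<bar>y\<bar> powr \<alpha>) \<le> M)"

lemma vx_dev0:
  assumes r: "r \<ge> 0" and lam: "lam \<ge> 0"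
  shows "\<bar>vx (lam * y) r - vx 0 r\<bar> \<le> Kh r * lam powr \<alpha> * \<bar>y\<bar> powr \<alpha>"
proof -
  have "\<bar>vx (lam * y) r - vx 0 r\<bar> \<le> Kh r * \<bar>lam * y - 0\<bar> powr \<alpha>" by (rule K_upper[OF r])
  also have "\<bar>lam * y - 0\<bar> powr \<alpha> = lam powr \<alpha> * \<bar>y\<bar> powr \<alpha>" using lam by (simp add: abs_mult powr_mult)
  finally show ?thesis by (simp add: mult.assoc)
qed

lemma pow1a: "x \<ge> 0 \<Longrightarrow> x * x powr \<alpha> = x powr (1 + \<alpha>)"
  by (cases "x = 0") (auto simp: powr_add)

lemma tay_g:
  assumes mu: "\<mu> \<in> \<Theta>" and r: "r \<ge> 0" and lam: "lam \<ge> 0" and hyp: "MH M \<or> Kh r = 0"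
  shows "\<bar>integral\<^sup>L \<mu> (\<lambda>y. v (lam * y) r) - (v 0 r + lam * vx 0 r * mean \<mu>)\<bar> \<le> Kh r * lam powr (1 + \<alpha>) * M"
proof -
  have i2: "integrable \<mu> (\<lambda>y. v 0 r + lam * vx 0 r * y)" using i_const[OF mu] int_id[OF mu] by auto
  have int2: "integral\<^sup>L \<mu> (\<lambda>y. v 0 r + lam * vx 0 r * y) = v 0 r + lam * vx 0 r * mean \<mu>"
    using i_const[OF mu] int_id[OF mu] meas1[OF mu] by (simp add: mean_def)
  have "\<bar>integral\<^sup>L \<mu> (\<lambda>y. v (lam * y) r) - integral\<^sup>L \<mu> (\<lambda>y. v 0 r + lam * vx 0 r * y)\<bar> \<le> Kh r * lam powr (1 + \<alpha>) * M"
  proof (rule int_close[OF mu i_v[OF mu r] i2, where w = "\<lambda>y. \<bar>y\<bar> powr (1 + \<alpha>)"])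
    fix y
    have "\<bar>v (lam * y) r - v 0 r - (lam * y - 0) * vx 0 r\<bar> \<le> \<bar>lam * y - 0\<bar> * (Kh r * \<bar>lam * y\<bar> powr \<alpha>)"
    proof (rule v_dev_x[OF r])
      fix z assume z: "min 0 (lam * y) \<le> z" "z \<le> max 0 (lam * y)"
      have "\<bar>z - 0\<bar> \<le> \<bar>lam * y\<bar>" using z by (auto simp: min_def max_def split: if_splits)
      have "\<bar>vx z r - vx 0 r\<bar> \<le> Kh r * \<bar>z - 0\<bar> powr \<alpha>" by (rule K_upper[OF r])
      also have "\<dots> \<le> Kh r * \<bar>lam * y\<bar> powr \<alpha>"
        using \<open>\<bar>z - 0\<bar> \<le> \<bar>lam * y\<bar>\<close> alpha K_nn[OF r] by (intro mult_left_mono powr_mono2) auto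
      finally show "\<bar>vx z r - vx 0 r\<bar> \<le> Kh r * \<bar>lam * y\<bar> powr \<alpha>" .
    qed
    also have "\<bar>lam * y - 0\<bar> * (Kh r * \<bar>lam * y\<bar> powr \<alpha>) = Kh r * (\<bar>lam * y\<bar> * \<bar>lam * y\<bar> powr \<alpha>)" by simp
    also have "\<bar>lam * y\<bar> * \<bar>lam * y\<bar> powr \<alpha> = lam powr (1 + \<alpha>) * \<bar>y\<bar> powr (1 + \<alpha>)"
    proof -
      have e1: "lam powr (1 + \<alpha>) = lam * lam powr \<alpha>" using pow1a[OF lam] by simp
      have e2: "\<bar>y\<bar> powr (1 + \<alpha>) = \<bar>y\<bar> * \<bar>y\<bar> powr \<alpha>" using pow1a[of "\<bar>y\<bar>"] by simp
      show ?thesis unfolding e1 e2 using lam by (simp add: abs_mult powr_mult algebra_simps)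
    qed
    finally show "\<bar>v (lam * y) r - (v 0 r + lam * vx 0 r * y)\<bar> \<le> Kh r * lam powr (1 + \<alpha>) * \<bar>y\<bar> powr (1 + \<alpha>)"
      by (simp add: algebra_simps)
  next
    show "0 \<le> Kh r * lam powr (1 + \<alpha>)" using K_nn[OF r] by simp
    show "Kh r * lam powr (1 + \<alpha>) = 0 \<or> integrable \<mu> (\<lambda>y. \<bar>y\<bar> powr (1 + \<alpha>)) \<and> integral\<^sup>L \<mu> (\<lambda>y. \<bar>y\<bar> powr (1 + \<alpha>)) \<le> M"
      using hyp mu by (auto simp: MH_def)
  qed
  then show ?thesis using int2 by simp
qed

lemma tay_yvx:
  assumes mu: "\<mu> \<in> \<Theta>" and r: "r \<ge> 0" and lam: "lam \<ge> 0" and hyp: "MH M \<or> Kh r = 0"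
  shows "\<bar>integral\<^sup>L \<mu> (\<lambda>y. y * vx (lam * y) r) - vx 0 r * mean \<mu>\<bar> \<le> Kh r * lam powr \<alpha> * M"
proof -
  have i2: "integrable \<mu> (\<lambda>y. vx 0 r * y)" using int_id[OF mu] by auto
  have "\<bar>integral\<^sup>L \<mu> (\<lambda>y. y * vx (lam * y) r) - integral\<^sup>L \<mu> (\<lambda>y. vx 0 r * y)\<bar> \<le> Kh r * lam powr \<alpha> * M"
  proof (rule int_close[OF mu i_yvx[OF mu r] i2, where w = "\<lambda>y. \<bar>y\<bar> powr (1 + \<alpha>)"])
    fix y
    have "\<bar>y * vx (lam * y) r - vx 0 r * y\<bar> = \<bar>y\<bar> * \<bar>vx (lam * y) r - vx 0 r\<bar>"
      by (simp add: abs_mult[symmetric] algebra_simps)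
    also have "\<dots> \<le> \<bar>y\<bar> * (Kh r * lam powr \<alpha> * \<bar>y\<bar> powr \<alpha>)"
      using vx_dev0[OF r lam] by (intro mult_left_mono) auto
    also have "\<dots> = Kh r * lam powr \<alpha> * (\<bar>y\<bar> * \<bar>y\<bar> powr \<alpha>)" by simp
    also have "\<bar>y\<bar> * \<bar>y\<bar> powr \<alpha> = \<bar>y\<bar> powr (1 + \<alpha>)" by (simp add: pow1a)
    finally show "\<bar>y * vx (lam * y) r - vx 0 r * y\<bar> \<le> Kh r * lam powr \<alpha> * \<bar>y\<bar> powr (1 + \<alpha>)" .
  next
    show "0 \<le> Kh r * lam powr \<alpha>" using K_nn[OF r] by simp
    show "Kh r * lam powr \<alpha> = 0 \<or> integrable \<mu> (\<lambda>y. \<bar>y\<bar> powr (1 + \<alpha>)) \<and> integral\<^sup>L \<mu> (\<lambda>y. \<bar>y\<bar> powr (1 + \<alpha>)) \<le> M"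
      using hyp mu by (auto simp: MH_def)
  qed
  then show ?thesis by (simp add: mean_def)
qed

lemma tay_p:
  assumes mu: "\<mu> \<in> \<Theta>" and r: "r \<ge> 0" and lam: "lam \<ge> 0" and hyp: "MH M \<or> Kh r = 0"
  shows "\<bar>integral\<^sup>L \<mu> (\<lambda>y. pp (vx (lam * y) r)) - pp (vx 0 r)\<bar> \<le> Kh r * lam powr \<alpha> * M"
proof -
  have "\<bar>integral\<^sup>L \<mu> (\<lambda>y. pp (vx (lam * y) r)) - integral\<^sup>L \<mu> (\<lambda>y. pp (vx 0 r))\<bar> \<le> Kh r * lam powr \<alpha> * M"
  proof (rule int_close[OF mu i_pvx[OF mu r] i_const[OF mu], where w = "\<lambda>y. M1 * \<bar>y\<bar> powr \<alpha>"])
    fix y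
    have "\<bar>pp (vx (lam * y) r) - pp (vx 0 r)\<bar> \<le> M1 * \<bar>vx (lam * y) r - vx 0 r\<bar>" by (rule pp_lip_abs)
    also have "\<dots> \<le> M1 * (Kh r * lam powr \<alpha> * \<bar>y\<bar> powr \<alpha>)"
      using vx_dev0[OF r lam] M1_nn by (intro mult_left_mono) auto
    finally show "\<bar>pp (vx (lam * y) r) - pp (vx 0 r)\<bar> \<le> Kh r * lam powr \<alpha> * (M1 * \<bar>y\<bar> powr \<alpha>)"
      by (simp add: algebra_simps)
  next
    show "0 \<le> Kh r * lam powr \<alpha>" using K_nn[OF r] by simp
    show "Kh r * lam powr \<alpha> = 0 \<or> integrable \<mu> (\<lambda>y. M1 * \<bar>y\<bar> powr \<alpha>) \<and> integral\<^sup>L \<mu> (\<lambda>y. M1 * \<bar>y\<bar> powr \<alpha>) \<le> M"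
      using hyp mu i_pa[OF mu] by (auto simp: MH_def)
  qed
  then show ?thesis using meas1[OF mu] by simp
qed

lemma int_DD:
  assumes mu: "\<mu> \<in> \<Theta>" and r: "r \<ge> 0"
  shows "integral\<^sup>L \<mu> (DD tb r) = integral\<^sup>L \<mu> (\<lambda>y. FF ((tb - r) * y) r) + integral\<^sup>L \<mu> (\<lambda>y. pp (vx ((tb - r) * y) r))
      - integral\<^sup>L \<mu> (\<lambda>y. y * vx ((tb - r) * y) r)"
proof -
  have "DD tb r = (\<lambda>y. (FF ((tb - r) * y) r + pp (vx ((tb - r) * y) r)) - y * vx ((tb - r) * y) r)"
    by (auto simp: DD_def FF_def fun_eq_iff)
  then show ?thesis using i_FF[OF mu r] i_pvx[OF mu r] i_yvx[OF mu r] by simp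
qed

definition Fp where "Fp tb r = sublin_E \<Theta> (\<lambda>y. FF ((tb - r) * y) r)"
definition Fm where "Fm tb r = sublin_E \<Theta> (\<lambda>y. - FF ((tb - r) * y) r)"

lemma FF_int_le: "\<mu> \<in> \<Theta> \<Longrightarrow> r \<ge> 0 \<Longrightarrow> integral\<^sup>L \<mu> (\<lambda>y. FF ((tb - r) * y) r) \<le> Fp tb r"
  unfolding Fp_def
proof (rule E_ge[where c = "Bc + M1 * Bc"])
  fix \<nu> assume nu: "\<nu> \<in> \<Theta>" and r: "r \<ge> 0"
  have "\<bar>integral\<^sup>L \<nu> (\<lambda>y. FF ((tb - r) * y) r)\<bar> \<le> Bc + M1 * Bc"
    by (rule int_bdd[OF nu i_FF[OF nu r]]) (rule FF_bound[OF r])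
  then show "integral\<^sup>L \<nu> (\<lambda>y. FF ((tb - r) * y) r) \<le> Bc + M1 * Bc" by simp
qed

lemma mFF_int_le: "\<mu> \<in> \<Theta> \<Longrightarrow> r \<ge> 0 \<Longrightarrow> integral\<^sup>L \<mu> (\<lambda>y. - FF ((tb - r) * y) r) \<le> Fm tb r"
  unfolding Fm_def
proof (rule E_ge[where c = "Bc + M1 * Bc"])
  fix \<nu> assume nu: "\<nu> \<in> \<Theta>" and r: "r \<ge> 0"
  have "\<bar>integral\<^sup>L \<nu> (\<lambda>y. FF ((tb - r) * y) r)\<bar> \<le> Bc + M1 * Bc"
    by (rule int_bdd[OF nu i_FF[OF nu r]]) (rule FF_bound[OF r])
  then show "integral\<^sup>L \<nu> (\<lambda>y. - FF ((tb - r) * y) r) \<le> Bc + M1 * Bc" by simp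
qed

end

context P33 begin

lemma gg_bound_le: "\<nu> \<in> \<Theta> \<Longrightarrow> r \<ge> 0 \<Longrightarrow> integral\<^sup>L \<nu> (\<lambda>y. v ((tb - r) * y) r) \<le> Bc"
  using gg_bdd[of \<nu> r tb] by (simp add: gg_def abs_le_iff)

lemma DD_decomp:
  assumes mu: "\<mu> \<in> \<Theta>" and r: "r \<ge> 0" and lam: "tb - r \<ge> 0" and hyp: "MH M \<or> Kh r = 0"
  shows "integral\<^sup>L \<mu> (DD tb r) \<le> integral\<^sup>L \<mu> (\<lambda>y. FF ((tb - r) * y) r) + (pp (vx 0 r) - vx 0 r * mean \<mu>)
            + 2 * Kh r * (tb - r) powr \<alpha> * M"
    and "- integral\<^sup>L \<mu> (DD tb r) \<le> integral\<^sup>L \<mu> (\<lambda>y. - FF ((tb - r) * y) r) + (vx 0 r * mean \<mu> - pp (vx 0 r))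
            + 2 * Kh r * (tb - r) powr \<alpha> * M"
proof -
  have a: "\<bar>integral\<^sup>L \<mu> (\<lambda>y. y * vx ((tb - r) * y) r) - vx 0 r * mean \<mu>\<bar> \<le> Kh r * (tb - r) powr \<alpha> * M"
    by (rule tay_yvx[OF mu r lam hyp])
  have b: "\<bar>integral\<^sup>L \<mu> (\<lambda>y. pp (vx ((tb - r) * y) r)) - pp (vx 0 r)\<bar> \<le> Kh r * (tb - r) powr \<alpha> * M"
    by (rule tay_p[OF mu r lam hyp])
  have c: "integral\<^sup>L \<mu> (\<lambda>y. - FF ((tb - r) * y) r) = - integral\<^sup>L \<mu> (\<lambda>y. FF ((tb - r) * y) r)" by simp
  show "integral\<^sup>L \<mu> (DD tb r) \<le> integral\<^sup>L \<mu> (\<lambda>y. FF ((tb - r) * y) r) + (pp (vx 0 r) - vx 0 r * mean \<mu>)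
            + 2 * Kh r * (tb - r) powr \<alpha> * M"
    using int_DD[OF mu r, of tb] a b unfolding abs_le_iff by linarith
  show "- integral\<^sup>L \<mu> (DD tb r) \<le> integral\<^sup>L \<mu> (\<lambda>y. - FF ((tb - r) * y) r) + (vx 0 r * mean \<mu> - pp (vx 0 r))
            + 2 * Kh r * (tb - r) powr \<alpha> * M"
    using int_DD[OF mu r, of tb] a b c unfolding abs_le_iff by linarith
qed

lemma dini_lower:
  assumes r: "0 < r" "r < tb" and hyp: "MH M \<or> Kh r = 0" and e: "e > 0"
  shows "\<exists>\<eta>>0. \<forall>h. 0 < h \<longrightarrow> h < \<eta> \<longrightarrow>
           psi tb r - psi tb (r + h) \<le> h * (Fm tb r + 2 * Kh r * (tb - r) powr \<alpha> * M + e)"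
proof -
  obtain \<eta> where eta: "\<eta> > 0" "\<forall>h r \<mu>. 0 < h \<longrightarrow> h < \<eta> \<longrightarrow> 0 \<le> r \<longrightarrow> \<mu> \<in> \<Theta> \<longrightarrow>
     \<bar>gg tb \<mu> (r + h) - gg tb \<mu> r - h * integral\<^sup>L \<mu> (DD tb r)\<bar> \<le> h * (e / 2)"
    using rem_unif[of "e / 2" tb] e by auto
  show ?thesis
  proof (intro exI[of _ \<eta>] conjI allI impI eta(1))
    fix h :: real assume h: "0 < h" "h < \<eta>"
    have r0: "r \<ge> 0" and rh: "r + h \<ge> 0" and lam: "tb - r \<ge> 0" using r h by auto
    obtain \<mu> where mu: "\<mu> \<in> \<Theta>" and approx: "psi tb r - h * (e / 2) < gg tb \<mu> r"
      using E_approx[of "\<lambda>y. v ((tb - r) * y) r" Bc "h * (e / 2)"] gg_bound_le[OF _ r0] h e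
      by (auto simp: psi_def gg_def)
    have p2: "gg tb \<mu> (r + h) \<le> psi tb (r + h)" by (rule gg_le_psi[OF mu rh])
    have rem: "\<bar>gg tb \<mu> (r + h) - gg tb \<mu> r - h * integral\<^sup>L \<mu> (DD tb r)\<bar> \<le> h * (e / 2)"
      using eta(2) h r0 mu by blast
    have d: "- integral\<^sup>L \<mu> (DD tb r) \<le> Fm tb r + 2 * Kh r * (tb - r) powr \<alpha> * M"
      using DD_decomp(2)[OF mu r0 lam hyp] mFF_int_le[OF mu r0, of tb] pp_ge[OF mu, of "vx 0 r"]
      by (simp add: mult.commute)
    have "h * (- integral\<^sup>L \<mu> (DD tb r)) \<le> h * (Fm tb r + 2 * Kh r * (tb - r) powr \<alpha> * M)"
      using d h by (intro mult_left_mono) auto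
    then show "psi tb r - psi tb (r + h) \<le> h * (Fm tb r + 2 * Kh r * (tb - r) powr \<alpha> * M + e)"
      using approx p2 rem unfolding abs_le_iff by (simp add: algebra_simps)
  qed
qed

lemma dini_upper:
  assumes r: "0 < r" "r < tb" and hyp: "MH M \<or> Kh r = 0" and e: "e > 0"
  shows "\<exists>\<eta>>0. \<forall>h. 0 < h \<longrightarrow> h < \<eta> \<longrightarrow>
           psi tb (r + h) - psi tb r \<le> h * (Fp tb r + 4 * Kh r * (tb - r) powr \<alpha> * M + e)"
proof -
  define lam where "lam = tb - r"
  have lam: "lam > 0" using r by (simp add: lam_def)
  define L where "L = Bc * (1 + M1)"
  have L: "L \<ge> 0" using Bc_nn M1_nn by (simp add: L_def)
  obtain \<eta>1 where eta1: "\<eta>1 > 0" "\<forall>h r \<mu>. 0 < h \<longrightarrow> h < \<eta>1 \<longrightarrow> 0 \<le> r \<longrightarrow> \<mu> \<in> \<Theta> \<longrightarrow>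
     \<bar>gg tb \<mu> (r + h) - gg tb \<mu> r - h * integral\<^sup>L \<mu> (DD tb r)\<bar> \<le> h * (e / 3)"
    using rem_unif[of "e / 3" tb] e by auto
  define \<eta>2 where "\<eta>2 = e * lam / (6 * L + e)"
  have eta2: "\<eta>2 > 0" using e lam L by (simp add: \<eta>2_def)
  show ?thesis
  proof (intro exI[of _ "min \<eta>1 \<eta>2"] conjI allI impI)
    show "min \<eta>1 \<eta>2 > 0" using eta1 eta2 by simp
    fix h :: real assume h: "0 < h" "h < min \<eta>1 \<eta>2"
    have r0: "r \<ge> 0" and rh: "r + h \<ge> 0" and lam0: "tb - r \<ge> 0" using r h by auto
    obtain \<mu> where mu: "\<mu> \<in> \<Theta>" and approx: "psi tb (r + h) - h * (e / 3) < gg tb \<mu> (r + h)"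
      using E_approx[of "\<lambda>y. v ((tb - (r + h)) * y) (r + h)" Bc "h * (e / 3)"] gg_bound_le[OF _ rh] h e
      by (auto simp: psi_def gg_def)
    have p1: "gg tb \<mu> r \<le> psi tb r" by (rule gg_le_psi[OF mu r0])
    have rem: "\<bar>gg tb \<mu> (r + h) - gg tb \<mu> r - h * integral\<^sup>L \<mu> (DD tb r)\<bar> \<le> h * (e / 3)"
      using eta1(2) h r0 mu by auto
    define a where "a = vx 0 r"
    define Q where "Q = 2 * Kh r * lam powr (1 + \<alpha>) * M + 2 * L * h + h * (e / 3)"
    have tmu: "\<bar>gg tb \<mu> r - (v 0 r + lam * a * mean \<mu>)\<bar> \<le> Kh r * lam powr (1 + \<alpha>) * M"
      using tay_g[OF mu r0 lam0 hyp] by (simp add: gg_def lam_def a_def)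
    have "a * mean \<nu> \<le> a * mean \<mu> + Q / lam" if nu: "\<nu> \<in> \<Theta>" for \<nu>
    proof -
      have "gg tb \<nu> (r + h) \<le> psi tb (r + h)" by (rule gg_le_psi[OF nu rh])
      moreover have "\<bar>gg tb \<nu> r - gg tb \<nu> (r + h)\<bar> \<le> L * \<bar>r - (r + h)\<bar>"
        using gg_lip[OF nu r0 rh, of tb] by (simp add: L_def)
      moreover have "\<bar>gg tb \<mu> (r + h) - gg tb \<mu> r\<bar> \<le> L * \<bar>(r + h) - r\<bar>"
        using gg_lip[OF mu rh r0, of tb] by (simp add: L_def)
      moreover have "\<bar>gg tb \<nu> r - (v 0 r + lam * a * mean \<nu>)\<bar> \<le> Kh r * lam powr (1 + \<alpha>) * M"
        using tay_g[OF nu r0 lam0 hyp] by (simp add: gg_def lam_def a_def)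
      ultimately have "lam * a * mean \<nu> \<le> lam * a * mean \<mu> + Q"
        using tmu approx h unfolding abs_le_iff Q_def by simp
      then have "lam * (a * mean \<nu>) \<le> lam * (a * mean \<mu> + Q / lam)" using lam by (simp add: algebra_simps)
      then show ?thesis using lam by simp
    qed
    then have ppa: "pp a \<le> a * mean \<mu> + Q / lam" by (rule pp_least)
    have Ql: "Q / lam = 2 * Kh r * lam powr \<alpha> * M + (2 * L + e / 3) * h / lam"
    proof -
      have "lam powr (1 + \<alpha>) = lam * lam powr \<alpha>" using pow1a[of lam] lam by simp
      then show ?thesis using lam unfolding Q_def by (simp add: field_simps)
    qed
    have small: "(2 * L + e / 3) * h / lam \<le> e / 3"
    proof -
      have "h \<le> e * lam / (6 * L + e)" using h by (simp add: \<eta>2_def)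
      then have "h * (6 * L + e) \<le> e * lam" using L e by (simp add: pos_le_divide_eq)
      then have "(2 * L + e / 3) * h \<le> e / 3 * lam" by (simp add: algebra_simps)
      then show ?thesis using lam by (simp add: pos_divide_le_eq)
    qed
    have d: "integral\<^sup>L \<mu> (DD tb r) \<le> Fp tb r + 4 * Kh r * (tb - r) powr \<alpha> * M + e / 3"
      using DD_decomp(1)[OF mu r0 lam0 hyp] FF_int_le[OF mu r0, of tb] ppa Ql small
      by (simp add: a_def lam_def mult.commute)
    have "h * integral\<^sup>L \<mu> (DD tb r) \<le> h * (Fp tb r + 4 * Kh r * (tb - r) powr \<alpha> * M + e / 3)"
      using d h by (intro mult_left_mono) auto
    then show "psi tb (r + h) - psi tb r \<le> h * (Fp tb r + 4 * Kh r * (tb - r) powr \<alpha> * M + e)"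
      using approx p1 rem unfolding abs_le_iff by (simp add: algebra_simps)
  qed
qed

end

context P33 begin

lemma FF_path_lip:
  assumes r: "r \<ge> 0" "r' \<ge> 0"
  shows "\<bar>FF ((tb - r) * y) r - FF ((tb - r') * y) r'\<bar> \<le> (Cc * (1 + M1) * \<bar>r - r'\<bar> powr \<alpha>) * (1 + \<bar>y\<bar>)"
proof -
  define x where "x = (tb - r) * y"
  define x' where "x' = (tb - r') * y"
  have xx: "\<bar>x - x'\<bar> + \<bar>r - r'\<bar> = \<bar>r - r'\<bar> * (1 + \<bar>y\<bar>)"
    by (simp add: x_def x'_def abs_mult[symmetric] algebra_simps abs_minus_commute)
  have pw: "(\<bar>r - r'\<bar> * (1 + \<bar>y\<bar>)) powr \<alpha> \<le> \<bar>r - r'\<bar> powr \<alpha> * (1 + \<bar>y\<bar>)"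
  proof -
    have "(1 + \<bar>y\<bar>) powr \<alpha> \<le> (1 + \<bar>y\<bar>) powr 1" using alpha by (intro powr_mono) auto
    then have "(1 + \<bar>y\<bar>) powr \<alpha> \<le> 1 + \<bar>y\<bar>" by simp
    then show ?thesis by (simp add: powr_mult mult_left_mono)
  qed
  have d: "Cc * (\<bar>x - x'\<bar> + \<bar>r - r'\<bar>) powr \<alpha> \<le> Cc * (\<bar>r - r'\<bar> powr \<alpha> * (1 + \<bar>y\<bar>))"
    unfolding xx using pw Cc_nn by (intro mult_left_mono)
  have a: "\<bar>vt x r - vt x' r'\<bar> \<le> Cc * (\<bar>r - r'\<bar> powr \<alpha> * (1 + \<bar>y\<bar>))" using Cvt[OF r] d by (rule order_trans)
  have "\<bar>pp (vx x r) - pp (vx x' r')\<bar> \<le> M1 * \<bar>vx x r - vx x' r'\<bar>" by (rule pp_lip_abs)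
  also have "\<dots> \<le> M1 * (Cc * (\<bar>r - r'\<bar> powr \<alpha> * (1 + \<bar>y\<bar>)))"
    using Cvx[OF r, of x x'] d M1_nn by (intro mult_left_mono) auto
  finally have b: "\<bar>pp (vx x r) - pp (vx x' r')\<bar> \<le> M1 * (Cc * (\<bar>r - r'\<bar> powr \<alpha> * (1 + \<bar>y\<bar>)))" .
  have "\<bar>FF x r - FF x' r'\<bar> \<le> \<bar>vt x r - vt x' r'\<bar> + \<bar>pp (vx x r) - pp (vx x' r')\<bar>"
    unfolding FF_def by linarith
  also have "\<dots> \<le> (Cc * (1 + M1) * \<bar>r - r'\<bar> powr \<alpha>) * (1 + \<bar>y\<bar>)" using a b by (simp add: algebra_simps)
  finally show ?thesis by (simp add: x_def x'_def)
qed

lemma Fp_le: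
  assumes r: "r \<ge> 0" "r' \<ge> 0"
  shows "Fp tb r \<le> Fp tb r' + (Cc * (1 + M1) * (1 + M1)) * \<bar>r - r'\<bar> powr \<alpha>"
  unfolding Fp_def
proof (rule E_mono)
  fix \<nu> assume nu: "\<nu> \<in> \<Theta>"
  have "\<bar>integral\<^sup>L \<nu> (\<lambda>y. FF ((tb - r') * y) r')\<bar> \<le> Bc + M1 * Bc"
    by (rule int_bdd[OF nu i_FF[OF nu r(2)]]) (rule FF_bound[OF r(2)])
  then show "integral\<^sup>L \<nu> (\<lambda>y. FF ((tb - r') * y) r') \<le> Bc + M1 * Bc" by simp
  have "integral\<^sup>L \<nu> (\<lambda>y. FF ((tb - r) * y) r) \<le> integral\<^sup>L \<nu> (\<lambda>y. FF ((tb - r') * y) r')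
      + (Cc * (1 + M1) * \<bar>r - r'\<bar> powr \<alpha>) * integral\<^sup>L \<nu> (\<lambda>y. 1 + \<bar>y\<bar>)"
    proof (rule int_le_gen[OF nu i_FF[OF nu r(1)] i_FF[OF nu r(2)] conjunct1[OF int_1y[OF nu]]])
      fix y
      show "FF ((tb - r) * y) r \<le> FF ((tb - r') * y) r' + Cc * (1 + M1) * \<bar>r - r'\<bar> powr \<alpha> * (1 + \<bar>y\<bar>)"
        using FF_path_lip[OF r, of tb y] unfolding abs_le_iff by linarith
    qed
  also have "\<dots> \<le> integral\<^sup>L \<nu> (\<lambda>y. FF ((tb - r') * y) r') + (Cc * (1 + M1) * \<bar>r - r'\<bar> powr \<alpha>) * (1 + M1)"
    using int_1y[OF nu] Cc_nn M1_nn by (intro add_left_mono mult_left_mono) auto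
  finally show "integral\<^sup>L \<nu> (\<lambda>y. FF ((tb - r) * y) r) \<le> integral\<^sup>L \<nu> (\<lambda>y. FF ((tb - r') * y) r')
      + Cc * (1 + M1) * (1 + M1) * \<bar>r - r'\<bar> powr \<alpha>" by (simp add: algebra_simps)
qed

lemma Fm_le:
  assumes r: "r \<ge> 0" "r' \<ge> 0"
  shows "Fm tb r \<le> Fm tb r' + (Cc * (1 + M1) * (1 + M1)) * \<bar>r - r'\<bar> powr \<alpha>"
  unfolding Fm_def
proof (rule E_mono)
  fix \<nu> assume nu: "\<nu> \<in> \<Theta>"
  have "\<bar>integral\<^sup>L \<nu> (\<lambda>y. FF ((tb - r') * y) r')\<bar> \<le> Bc + M1 * Bc"
    by (rule int_bdd[OF nu i_FF[OF nu r(2)]]) (rule FF_bound[OF r(2)])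
  then show "integral\<^sup>L \<nu> (\<lambda>y. - FF ((tb - r') * y) r') \<le> Bc + M1 * Bc" by simp
  have "integral\<^sup>L \<nu> (\<lambda>y. - FF ((tb - r) * y) r) \<le> integral\<^sup>L \<nu> (\<lambda>y. - FF ((tb - r') * y) r')
      + (Cc * (1 + M1) * \<bar>r - r'\<bar> powr \<alpha>) * integral\<^sup>L \<nu> (\<lambda>y. 1 + \<bar>y\<bar>)"
    proof (rule int_le_gen[OF nu i_mFF[OF nu r(1)] i_mFF[OF nu r(2)] conjunct1[OF int_1y[OF nu]]])
      fix y
      show "- FF ((tb - r) * y) r \<le> - FF ((tb - r') * y) r' + Cc * (1 + M1) * \<bar>r - r'\<bar> powr \<alpha> * (1 + \<bar>y\<bar>)"
        using FF_path_lip[OF r, of tb y] unfolding abs_le_iff by linarith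
    qed
  also have "\<dots> \<le> integral\<^sup>L \<nu> (\<lambda>y. - FF ((tb - r') * y) r') + (Cc * (1 + M1) * \<bar>r - r'\<bar> powr \<alpha>) * (1 + M1)"
    using int_1y[OF nu] Cc_nn M1_nn by (intro add_left_mono mult_left_mono) auto
  finally show "integral\<^sup>L \<nu> (\<lambda>y. - FF ((tb - r) * y) r) \<le> integral\<^sup>L \<nu> (\<lambda>y. - FF ((tb - r') * y) r')
      + Cc * (1 + M1) * (1 + M1) * \<bar>r - r'\<bar> powr \<alpha>" by (simp add: algebra_simps)
qed

lemma Fp_lip: "x \<ge> 0 \<Longrightarrow> y \<ge> 0 \<Longrightarrow> \<bar>Fp tb x - Fp tb y\<bar> \<le> Cc * (1 + M1) * (1 + M1) * \<bar>x - y\<bar> powr \<alpha>"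
  using Fp_le[of x y tb] Fp_le[of y x tb] by (simp add: abs_minus_commute abs_le_iff)

lemma Fm_lip: "x \<ge> 0 \<Longrightarrow> y \<ge> 0 \<Longrightarrow> \<bar>Fm tb x - Fm tb y\<bar> \<le> Cc * (1 + M1) * (1 + M1) * \<bar>x - y\<bar> powr \<alpha>"
  using Fm_le[of x y tb] Fm_le[of y x tb] by (simp add: abs_minus_commute abs_le_iff)

lemma Fp_cont: "continuous_on {0..} (Fp tb)"
  by (rule holder_cont_on[where a = \<alpha> and c = "Cc * (1 + M1) * (1 + M1)", OF alpha(1)])
    (use Fp_lip in auto)

lemma Fm_cont: "continuous_on {0..} (Fm tb)"
  by (rule holder_cont_on[where a = \<alpha> and c = "Cc * (1 + M1) * (1 + M1)", OF alpha(1)])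
    (use Fm_lip in auto)

lemma Icc_leb: "{a..b::real} \<in> sets lebesgue" by simp

lemma K_int: "t \<ge> 0 \<Longrightarrow> Kh integrable_on {t..tb}"
proof -
  assume t: "t \<ge> 0"
  have m: "Kh \<in> borel_measurable (lebesgue_on {t..tb})"
  proof (rule lsc_meas[OF Icc_leb])
    fix w a assume w: "w \<in> {t..tb}" and a: "a < Kh w"
    obtain d where d: "d > 0" "\<forall>r'. r' \<ge> 0 \<longrightarrow> \<bar>r' - w\<bar> < d \<longrightarrow> a < Kh r'" using K_lsc[OF _ a] w t by auto
    show "\<exists>d>0. \<forall>w'\<in>{t..tb}. \<bar>w' - w\<bar> < d \<longrightarrow> a < Kh w'" using d t by (intro exI[of _ d]) auto
  qed
  show ?thesis
    by (rule measurable_bounded_by_integrable_imp_integrable_real[OF m integrable_const_ivl[of Cc t tb] _ Icc_leb])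
      (use t K_nn K_le in auto)
qed

lemma K_int_nn: "t \<ge> 0 \<Longrightarrow> 0 \<le> integral {t..tb} Kh"
  by (rule Henstock_Kurzweil_Integration.integral_nonneg[OF K_int]) (auto intro: K_nn)

lemma cK_lsc:
  assumes c: "c \<ge> 0" and r: "r \<ge> 0" and e: "e > 0"
  shows "\<exists>d>0. \<forall>s. s \<ge> 0 \<longrightarrow> \<bar>s - r\<bar> < d \<longrightarrow> c * Kh r - e < c * Kh s"
proof (cases "c = 0")
  case True then show ?thesis using e by (intro exI[of _ 1]) auto
next
  case False
  then have c': "c > 0" using c by simp
  have "Kh r - e / c < Kh r" using e c' by simp
  from K_lsc[OF r this] obtain d where d: "d > 0" "\<forall>s. s \<ge> 0 \<longrightarrow> \<bar>s - r\<bar> < d \<longrightarrow> Kh r - e / c < Kh s" by auto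
  show ?thesis
  proof (intro exI[of _ d] conjI allI impI d(1))
    fix s assume "s \<ge> 0" "\<bar>s - r\<bar> < d"
    then have "Kh r - e / c < Kh s" using d by auto
    then have "c * (Kh r - e / c) < c * Kh s" using c' by simp
    then show "c * Kh r - e < c * Kh s" using c' by (simp add: algebra_simps)
  qed
qed

lemma cont_lsc:
  fixes F :: "real \<Rightarrow> real" and r :: real
  assumes "continuous_on {0..} F" "r \<ge> 0" "e > 0"
  shows "\<exists>d>0. \<forall>s. s \<ge> 0 \<longrightarrow> \<bar>s - r\<bar> < d \<longrightarrow> F r - e < F s"
proof -
  obtain d where "d > 0" "\<forall>s\<in>{0..}. dist s r < d \<longrightarrow> dist (F s) (F r) < e"
    using assms unfolding continuous_on_iff by (meson atLeast_iff)
  then show ?thesis by (intro exI[of _ d]) (auto simp: dist_real_def)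
qed

end

context P33 begin

lemma core_lower:
  assumes t: "0 \<le> t" "t \<le> tb" and M: "M \<ge> 0" and hyp: "\<And>r. t < r \<Longrightarrow> r < tb \<Longrightarrow> MH M \<or> Kh r = 0"
  shows "psi tb t - psi tb tb \<le> integral {t..tb} (Fm tb) + 4 * (tb - t) powr \<alpha> * M * integral {t..tb} Kh"
proof -
  define c where "c = 4 * (tb - t) powr \<alpha> * M"
  have c: "c \<ge> 0" using M by (simp add: c_def)
  define H where "H r = Fm tb r + c * Kh r" for r
  have iF: "Fm tb integrable_on {t..tb}"
    by (rule integrable_continuous_interval) (rule continuous_on_subset[OF Fm_cont], use t in auto)
  have iK: "(\<lambda>r. c * Kh r) integrable_on {t..tb}" using integrable_on_cmult_left[OF K_int[OF t(1)], of c] by simp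
  have iH: "H integrable_on {t..tb}" unfolding H_def[abs_def] using iF iK by (rule integrable_add)
  have intH: "integral {t..tb} H = integral {t..tb} (Fm tb) + c * integral {t..tb} Kh"
    unfolding H_def[abs_def] using iF iK by (simp add: integral_add)
  have "(\<lambda>r. - psi tb r) tb - (\<lambda>r. - psi tb r) t \<le> integral {t..tb} H"
  proof (rule dini_int[OF t(2)])
    show "continuous_on {t..tb} (\<lambda>r. - psi tb r)"
      by (intro continuous_intros continuous_on_subset[OF psi_cont]) (use t in auto)
    show "H integrable_on {t..tb}" by (rule iH)
  next
    fix r e :: real assume r: "t < r" "r < tb" and e: "e > 0"
    obtain d1 where d1: "d1 > 0" "\<forall>s. s \<ge> 0 \<longrightarrow> \<bar>s - r\<bar> < d1 \<longrightarrow> Fm tb r - e / 2 < Fm tb s"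
      using cont_lsc[OF Fm_cont, of r "e/2"] r t e by auto
    obtain d2 where d2: "d2 > 0" "\<forall>s. s \<ge> 0 \<longrightarrow> \<bar>s - r\<bar> < d2 \<longrightarrow> c * Kh r - e / 2 < c * Kh s"
      using cK_lsc[OF c, of r "e/2"] r t e by auto
    show "\<exists>d>0. \<forall>s. t < s \<longrightarrow> s < tb \<longrightarrow> \<bar>s - r\<bar> < d \<longrightarrow> H r - e < H s"
    proof (intro exI[of _ "min d1 d2"] conjI allI impI)
      show "min d1 d2 > 0" using d1 d2 by simp
      fix s assume s: "t < s" "s < tb" "\<bar>s - r\<bar> < min d1 d2"
      then have "Fm tb r - e / 2 < Fm tb s" "c * Kh r - e / 2 < c * Kh s" using d1 d2 t by auto
      then show "H r - e < H s" by (simp add: H_def)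
    qed
  next
    fix r e :: real assume r: "t < r" "r < tb" and e: "e > 0"
    have r0: "0 < r" using r t by simp
    obtain \<eta> where eta: "\<eta> > 0" "\<forall>h. 0 < h \<longrightarrow> h < \<eta> \<longrightarrow>
           psi tb r - psi tb (r + h) \<le> h * (Fm tb r + 2 * Kh r * (tb - r) powr \<alpha> * M + e)"
      using dini_lower[OF r0 r(2) hyp[OF r] e] by auto
    have cmp: "2 * Kh r * (tb - r) powr \<alpha> * M \<le> c * Kh r"
    proof -
      have "(tb - r) powr \<alpha> \<le> (tb - t) powr \<alpha>" using r t alpha by (intro powr_mono2) auto
      then have "Kh r * M * (tb - r) powr \<alpha> \<le> Kh r * M * (tb - t) powr \<alpha>"
        using K_nn[of r] r0 M by (intro mult_left_mono) auto
      moreover have "0 \<le> Kh r * M * (tb - r) powr \<alpha>" using K_nn[of r] r0 M by simp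
      ultimately show ?thesis by (simp add: c_def algebra_simps)
    qed
    show "\<exists>\<eta>>0. \<forall>h. 0 < h \<longrightarrow> h < \<eta> \<longrightarrow> (\<lambda>r. - psi tb r) (r + h) - (\<lambda>r. - psi tb r) r \<le> h * (H r + e)"
    proof (intro exI[of _ \<eta>] conjI allI impI eta(1))
      fix h :: real assume h: "0 < h" "h < \<eta>"
      have "psi tb r - psi tb (r + h) \<le> h * (Fm tb r + 2 * Kh r * (tb - r) powr \<alpha> * M + e)" using eta h by auto
      also have "\<dots> \<le> h * (H r + e)" using cmp h by (intro mult_left_mono) (auto simp: H_def)
      finally show "(\<lambda>r. - psi tb r) (r + h) - (\<lambda>r. - psi tb r) r \<le> h * (H r + e)" by simp
    qed
  qed
  then show ?thesis using intH by (simp add: c_def)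
qed

lemma core_upper:
  assumes t: "0 \<le> t" "t \<le> tb" and M: "M \<ge> 0" and hyp: "\<And>r. t < r \<Longrightarrow> r < tb \<Longrightarrow> MH M \<or> Kh r = 0"
  shows "psi tb tb - psi tb t \<le> integral {t..tb} (Fp tb) + 4 * (tb - t) powr \<alpha> * M * integral {t..tb} Kh"
proof -
  define c where "c = 4 * (tb - t) powr \<alpha> * M"
  have c: "c \<ge> 0" using M by (simp add: c_def)
  define H where "H r = Fp tb r + c * Kh r" for r
  have iF: "Fp tb integrable_on {t..tb}"
    by (rule integrable_continuous_interval) (rule continuous_on_subset[OF Fp_cont], use t in auto)
  have iK: "(\<lambda>r. c * Kh r) integrable_on {t..tb}" using integrable_on_cmult_left[OF K_int[OF t(1)], of c] by simp
  have iH: "H integrable_on {t..tb}" unfolding H_def[abs_def] using iF iK by (rule integrable_add)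
  have intH: "integral {t..tb} H = integral {t..tb} (Fp tb) + c * integral {t..tb} Kh"
    unfolding H_def[abs_def] using iF iK by (simp add: integral_add)
  have "psi tb tb - psi tb t \<le> integral {t..tb} H"
  proof (rule dini_int[OF t(2)])
    show "continuous_on {t..tb} (psi tb)"
      by (rule continuous_on_subset[OF psi_cont]) (use t in auto)
    show "H integrable_on {t..tb}" by (rule iH)
  next
    fix r e :: real assume r: "t < r" "r < tb" and e: "e > 0"
    obtain d1 where d1: "d1 > 0" "\<forall>s. s \<ge> 0 \<longrightarrow> \<bar>s - r\<bar> < d1 \<longrightarrow> Fp tb r - e / 2 < Fp tb s"
      using cont_lsc[OF Fp_cont, of r "e/2"] r t e by auto
    obtain d2 where d2: "d2 > 0" "\<forall>s. s \<ge> 0 \<longrightarrow> \<bar>s - r\<bar> < d2 \<longrightarrow> c * Kh r - e / 2 < c * Kh s"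
      using cK_lsc[OF c, of r "e/2"] r t e by auto
    show "\<exists>d>0. \<forall>s. t < s \<longrightarrow> s < tb \<longrightarrow> \<bar>s - r\<bar> < d \<longrightarrow> H r - e < H s"
    proof (intro exI[of _ "min d1 d2"] conjI allI impI)
      show "min d1 d2 > 0" using d1 d2 by simp
      fix s assume s: "t < s" "s < tb" "\<bar>s - r\<bar> < min d1 d2"
      then have "Fp tb r - e / 2 < Fp tb s" "c * Kh r - e / 2 < c * Kh s" using d1 d2 t by auto
      then show "H r - e < H s" by (simp add: H_def)
    qed
  next
    fix r e :: real assume r: "t < r" "r < tb" and e: "e > 0"
    have r0: "0 < r" using r t by simp
    obtain \<eta> where eta: "\<eta> > 0" "\<forall>h. 0 < h \<longrightarrow> h < \<eta> \<longrightarrow>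
           psi tb (r + h) - psi tb r \<le> h * (Fp tb r + 4 * Kh r * (tb - r) powr \<alpha> * M + e)"
      using dini_upper[OF r0 r(2) hyp[OF r] e] by auto
    have cmp: "4 * Kh r * (tb - r) powr \<alpha> * M \<le> c * Kh r"
    proof -
      have "(tb - r) powr \<alpha> \<le> (tb - t) powr \<alpha>" using r t alpha by (intro powr_mono2) auto
      then have "Kh r * M * (tb - r) powr \<alpha> \<le> Kh r * M * (tb - t) powr \<alpha>"
        using K_nn[of r] r0 M by (intro mult_left_mono) auto
      then show ?thesis by (simp add: c_def algebra_simps)
    qed
    show "\<exists>\<eta>>0. \<forall>h. 0 < h \<longrightarrow> h < \<eta> \<longrightarrow> psi tb (r + h) - psi tb r \<le> h * (H r + e)"
    proof (intro exI[of _ \<eta>] conjI allI impI eta(1))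
      fix h :: real assume h: "0 < h" "h < \<eta>"
      have "psi tb (r + h) - psi tb r \<le> h * (Fp tb r + 4 * Kh r * (tb - r) powr \<alpha> * M + e)" using eta h by auto
      also have "\<dots> \<le> h * (H r + e)" using cmp h by (intro mult_left_mono) (auto simp: H_def)
      finally show "psi tb (r + h) - psi tb r \<le> h * (H r + e)" .
    qed
  qed
  then show ?thesis using intH by (simp add: c_def)
qed

lemma K_zero:
  assumes t: "0 \<le> t" and I: "integral {t..tb} Kh = 0" and r: "t < r" "r < tb"
  shows "Kh r = 0"
proof (rule ccontr)
  assume "Kh r \<noteq> 0"
  then have pos: "Kh r > 0" using K_nn[of r] r t by simp
  have "Kh r / 2 < Kh r" using pos by simp
  from K_lsc[OF _ this] obtain d where d: "d > 0" "\<forall>s. s \<ge> 0 \<longrightarrow> \<bar>s - r\<bar> < d \<longrightarrow> Kh r / 2 < Kh s"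
    using r t by auto
  obtain m where m: "0 < m" "m \<le> d" "m \<le> r - t" "m \<le> tb - r" using d r
    by (intro that[of "min d (min (r - t) (tb - r))"]) auto
  define d' where "d' = m / 2"
  have d': "d' > 0" "d' < d" "r - d' \<ge> t" "r + d' \<le> tb" using m unfolding d'_def by linarith+
  have sub: "{r - d'..r + d'} \<subseteq> {t..tb}" using d' by auto
  have iJ: "Kh integrable_on {r - d'..r + d'}" by (rule integrable_on_subinterval[OF K_int[OF t] sub])
  have "integral {r - d'..r + d'} (\<lambda>s. Kh r / 2) \<le> integral {r - d'..r + d'} Kh"
  proof (rule integral_le[OF integrable_const_ivl iJ])
    fix s assume "s \<in> {r - d'..r + d'}"
    then have "s \<ge> 0" "\<bar>s - r\<bar> < d" using d' t by auto
    then show "Kh r / 2 \<le> Kh s" using d(2) by (auto intro: less_imp_le)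
  qed
  moreover have "integral {r - d'..r + d'} (\<lambda>s. Kh r / 2) = 2 * d' * (Kh r / 2)" using d' by simp
  moreover have "integral {r - d'..r + d'} Kh \<le> integral {t..tb} Kh"
    by (rule integral_subset_le[OF sub iJ K_int[OF t]]) (use t in \<open>auto intro: K_nn\<close>)
  ultimately have "2 * d' * (Kh r / 2) \<le> 0" using I by linarith
  moreover have "2 * d' * (Kh r / 2) > 0" using d' pos by simp
  ultimately show False by simp
qed

end

context P33 begin

lemma young_a:
  assumes a: "a \<ge> 0" and b: "b \<ge> 0"
  shows "a powr \<alpha> * b \<le> \<alpha> / (1 + \<alpha>) * a powr (1 + \<alpha>) + b powr (1 + \<alpha>) / (1 + \<alpha>)"
proof -
  have p: "(1 + \<alpha>) / \<alpha> > 1" using alpha by (simp add: field_simps)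
  have q: "1 + \<alpha> > 1" using alpha by simp
  have pq: "1 / ((1 + \<alpha>) / \<alpha>) + 1 / (1 + \<alpha>) = 1" using alpha by (simp add: field_simps)
  have "a powr \<alpha> * b \<le> (a powr \<alpha>) powr ((1 + \<alpha>) / \<alpha>) / ((1 + \<alpha>) / \<alpha>) + b powr (1 + \<alpha>) / (1 + \<alpha>)"
    by (rule Youngs_inequality[OF p q pq]) (use a b in auto)
  also have "(a powr \<alpha>) powr ((1 + \<alpha>) / \<alpha>) = a powr (1 + \<alpha>)" using alpha by (simp add: powr_powr)
  finally show ?thesis by (simp add: field_simps)
qed

lemma MH_fin:
  assumes fin: "sublin_E_nn \<Theta> (\<lambda>y. \<bar>y\<bar> powr (1 + \<alpha>)) \<noteq> \<infinity>"
  shows "MH (enn2real (sublin_E_nn \<Theta> (\<lambda>y. \<bar>y\<bar> powr (1 + \<alpha>))))"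
proof -
  define E where "E = sublin_E_nn \<Theta> (\<lambda>y. \<bar>y\<bar> powr (1 + \<alpha>))"
  define M where "M = enn2real E"
  have Elt: "E < \<top>" using fin by (simp add: E_def top.not_eq_extremum)
  have EM: "E = ennreal M" using Elt by (simp add: M_def ennreal_enn2real)
  have M0: "M \<ge> 0" by (simp add: M_def)
  have mom: "integrable \<mu> (\<lambda>y. \<bar>y\<bar> powr (1 + \<alpha>)) \<and> integral\<^sup>L \<mu> (\<lambda>y. \<bar>y\<bar> powr (1 + \<alpha>)) \<le> M" if mu: "\<mu> \<in> \<Theta>" for \<mu>
  proof
    have nn: "(\<integral>\<^sup>+ y. ennreal (\<bar>y\<bar> powr (1 + \<alpha>)) \<partial>\<mu>) \<le> E"
      unfolding E_def sublin_E_nn_def using mu by (rule SUP_upper)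
    show i: "integrable \<mu> (\<lambda>y. \<bar>y\<bar> powr (1 + \<alpha>))"
    proof (rule integrableI_bounded)
      show "(\<lambda>y. \<bar>y\<bar> powr (1 + \<alpha>)) \<in> borel_measurable \<mu>" by (rule meas_mu[OF mu]) measurable
      have "(\<integral>\<^sup>+ y. ennreal (norm (\<bar>y\<bar> powr (1 + \<alpha>))) \<partial>\<mu>) = (\<integral>\<^sup>+ y. ennreal (\<bar>y\<bar> powr (1 + \<alpha>)) \<partial>\<mu>)"
        by simp
      also have "\<dots> < \<infinity>" using nn Elt by (simp add: le_less_trans)
      finally show "(\<integral>\<^sup>+ y. ennreal (norm (\<bar>y\<bar> powr (1 + \<alpha>))) \<partial>\<mu>) < \<infinity>" .
    qed
    have "ennreal (integral\<^sup>L \<mu> (\<lambda>y. \<bar>y\<bar> powr (1 + \<alpha>))) = (\<integral>\<^sup>+ y. ennreal (\<bar>y\<bar> powr (1 + \<alpha>)) \<partial>\<mu>)"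
      by (rule nn_integral_eq_integral[symmetric, OF i]) simp
    then have "ennreal (integral\<^sup>L \<mu> (\<lambda>y. \<bar>y\<bar> powr (1 + \<alpha>))) \<le> ennreal M" using nn EM by simp
    then show "integral\<^sup>L \<mu> (\<lambda>y. \<bar>y\<bar> powr (1 + \<alpha>)) \<le> M" using M0 by (simp add: ennreal_le_iff)
  qed
  have prod: "M1 * integral\<^sup>L \<mu> (\<lambda>y. \<bar>y\<bar> powr \<alpha>) \<le> M" if mu: "\<mu> \<in> \<Theta>" for \<mu>
  proof -
    define P where "P = integral\<^sup>L \<mu> (\<lambda>y. \<bar>y\<bar> powr \<alpha>)"
    have P0: "P \<ge> 0" unfolding P_def by (rule Bochner_Integration.integral_nonneg) simp
    have key: "P * integral\<^sup>L \<nu> (\<lambda>z. \<bar>z\<bar>) \<le> M" if nu: "\<nu> \<in> \<Theta>" for \<nu>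
    proof -
      have step: "P * \<bar>z\<bar> \<le> \<alpha> / (1 + \<alpha>) * integral\<^sup>L \<mu> (\<lambda>y. \<bar>y\<bar> powr (1 + \<alpha>)) + \<bar>z\<bar> powr (1 + \<alpha>) / (1 + \<alpha>)" for z
      proof -
        have "integral\<^sup>L \<mu> (\<lambda>y. \<bar>y\<bar> powr \<alpha> * \<bar>z\<bar>) \<le> integral\<^sup>L \<mu> (\<lambda>y. \<bar>z\<bar> powr (1 + \<alpha>) / (1 + \<alpha>))
             + \<alpha> / (1 + \<alpha>) * integral\<^sup>L \<mu> (\<lambda>y. \<bar>y\<bar> powr (1 + \<alpha>))"
          by (rule int_le_gen[OF mu _ i_const[OF mu] conjunct1[OF mom[OF mu]]])
            (use i_pa[OF mu] young_a in \<open>auto simp: algebra_simps\<close>)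
        then show ?thesis using meas1[OF mu] by (simp add: P_def algebra_simps)
      qed
      have "integral\<^sup>L \<nu> (\<lambda>z. P * \<bar>z\<bar>) \<le> integral\<^sup>L \<nu> (\<lambda>z. \<alpha> / (1 + \<alpha>) * integral\<^sup>L \<mu> (\<lambda>y. \<bar>y\<bar> powr (1 + \<alpha>)))
           + 1 / (1 + \<alpha>) * integral\<^sup>L \<nu> (\<lambda>z. \<bar>z\<bar> powr (1 + \<alpha>))"
        by (rule int_le_gen[OF nu _ i_const[OF nu] conjunct1[OF mom[OF nu]]])
          (use int_abs[OF nu] step in auto)
      also have "\<dots> \<le> \<alpha> / (1 + \<alpha>) * M + 1 / (1 + \<alpha>) * M"
      proof -
        have c1: "\<alpha> / (1 + \<alpha>) * integral\<^sup>L \<mu> (\<lambda>y. \<bar>y\<bar> powr (1 + \<alpha>)) \<le> \<alpha> / (1 + \<alpha>) * M"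
          using mom[OF mu] alpha by (intro mult_left_mono) auto
        have c2: "1 / (1 + \<alpha>) * integral\<^sup>L \<nu> (\<lambda>z. \<bar>z\<bar> powr (1 + \<alpha>)) \<le> 1 / (1 + \<alpha>) * M"
          using mom[OF nu] alpha by (intro mult_left_mono) auto
        show ?thesis unfolding int_const[OF nu] using c1 c2 by linarith
      qed
      also have "\<dots> = (\<alpha> / (1 + \<alpha>) + 1 / (1 + \<alpha>)) * M" by (simp add: algebra_simps)
      also have "\<alpha> / (1 + \<alpha>) + 1 / (1 + \<alpha>) = 1" using alpha by (simp add: field_simps)
      finally show ?thesis by simp
    qed
    show ?thesis
    proof (cases "P = 0")
      case True then show ?thesis using M0 by (simp add: P_def)
    next
      case False
      then have Pp: "P > 0" using P0 by simp
      have "M1 \<le> M / P" unfolding M1_def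
        by (rule E_le) (use key Pp in \<open>simp add: pos_le_divide_eq mult.commute\<close>)
      then show ?thesis using Pp by (simp add: P_def[symmetric] pos_le_divide_eq mult.commute)
    qed
  qed
  show ?thesis unfolding MH_def M_def[symmetric] E_def[symmetric] using mom prod by blast
qed

end

theorem proposition3p3:
  fixes \<alpha> :: real and \<Theta> :: "real measure set"
    and v vx vt f :: "real \<Rightarrow> real \<Rightarrow> real" and \<phi> :: "real \<Rightarrow> real"
    and t tb :: real
  assumes alpha: "0 < \<alpha>" "\<alpha> \<le> 1"
    and Theta: "weakly_compact_probs \<Theta>"
    and H: "cond_H \<Theta>"
    and reg: "C_b_1_alpha \<alpha> v vx vt"
    and pde: "\<And>x s. s > 0 \<Longrightarrow> vt x s - sublin_E \<Theta> (\<lambda>y. vx x s * y) = f x s"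
    and init: "\<And>x. v x 0 = \<phi> x"
    and phi: "C_b_Lip \<phi>"
    and times: "0 \<le> t" "t \<le> tb" "tb \<le> 1"
  shows "ereal (v 0 tb - sublin_E \<Theta> (\<lambda>y. v ((tb - t) * y) t))
           \<ge> - (ereal (4 * (tb - t) powr \<alpha> * integral {t..tb} (\<lambda>s. holder_seminorm \<alpha> (\<lambda>x. vx x s)))
                 * enn2ereal (sublin_E_nn \<Theta> (\<lambda>y. \<bar>y\<bar> powr (1 + \<alpha>))))
             - ereal (integral {t..tb} (\<lambda>s. sublin_E \<Theta> (\<lambda>y. - f ((tb - s) * y) s)))
       \<and> ereal (v 0 tb - sublin_E \<Theta> (\<lambda>y. v ((tb - t) * y) t))
           \<le> ereal (4 * (tb - t) powr \<alpha> * integral {t..tb} (\<lambda>s. holder_seminorm \<alpha> (\<lambda>x. vx x s)))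
                 * enn2ereal (sublin_E_nn \<Theta> (\<lambda>y. \<bar>y\<bar> powr (1 + \<alpha>)))
             + ereal (integral {t..tb} (\<lambda>s. sublin_E \<Theta> (\<lambda>y. f ((tb - s) * y) s)))"
proof -
  interpret P: P33 \<alpha> \<Theta> v vx vt by unfold_locales (use alpha Theta H reg in auto)
  have t0: "0 \<le> tb" using times by simp
  have Kfun: "(\<lambda>s. holder_seminorm \<alpha> (\<lambda>x. vx x s)) = P.Kh" by (simp add: fun_eq_iff P.Kh_def)
  have f_eq: "f x s = P.FF x s" if "s > 0" for x s
    using pde[OF that, of x] by (simp add: P.FF_def P.pp_def)
  have Im: "integral {t..tb} (\<lambda>s. sublin_E \<Theta> (\<lambda>y. - f ((tb - s) * y) s)) = integral {t..tb} (P.Fm tb)"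
  proof (rule integral_spike[OF negligible_sing[of 0]])
    fix s assume "s \<in> {t..tb} - {0}"
    then have "s > 0" using times by auto
    then show "P.Fm tb s = sublin_E \<Theta> (\<lambda>y. - f ((tb - s) * y) s)" by (simp add: P.Fm_def f_eq)
  qed
  have Ip: "integral {t..tb} (\<lambda>s. sublin_E \<Theta> (\<lambda>y. f ((tb - s) * y) s)) = integral {t..tb} (P.Fp tb)"
  proof (rule integral_spike[OF negligible_sing[of 0]])
    fix s assume "s \<in> {t..tb} - {0}"
    then have "s > 0" using times by auto
    then show "P.Fp tb s = sublin_E \<Theta> (\<lambda>y. f ((tb - s) * y) s)" by (simp add: P.Fp_def f_eq)
  qed
  define A where "A = v 0 tb - sublin_E \<Theta> (\<lambda>y. v ((tb - t) * y) t)"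
  have A: "A = P.psi tb tb - P.psi tb t" using P.psi_tb[OF t0] by (simp add: A_def P.psi_def)
  define I where "I = integral {t..tb} P.Kh"
  have I0: "I \<ge> 0" unfolding I_def by (rule P.K_int_nn) (use times in simp)
  define c where "c = 4 * (tb - t) powr \<alpha> * I"
  have c0: "c \<ge> 0" using I0 by (simp add: c_def)
  define E where "E = sublin_E_nn \<Theta> (\<lambda>y. \<bar>y\<bar> powr (1 + \<alpha>))"
  have goal: "ereal A \<ge> - (ereal c * enn2ereal E) - ereal (integral {t..tb} (P.Fm tb))
           \<and> ereal A \<le> ereal c * enn2ereal E + ereal (integral {t..tb} (P.Fp tb))"
  proof (cases "E = \<infinity>")
    case False
    define M where "M = enn2real E"
    have EM: "E = ennreal M" using False by (simp add: M_def ennreal_enn2real top.not_eq_extremum)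
    have M0: "M \<ge> 0" by (simp add: M_def)
    have MH: "P.MH M" using P.MH_fin False by (simp add: E_def M_def)
    have lo: "P.psi tb t - P.psi tb tb \<le> integral {t..tb} (P.Fm tb) + 4 * (tb - t) powr \<alpha> * M * I"
      using P.core_lower[OF times(1) times(2) M0] MH by (simp add: I_def)
    have up: "P.psi tb tb - P.psi tb t \<le> integral {t..tb} (P.Fp tb) + 4 * (tb - t) powr \<alpha> * M * I"
      using P.core_upper[OF times(1) times(2) M0] MH by (simp add: I_def)
    have "enn2ereal E = ereal M" using EM M0 by simp
    then show ?thesis using lo up A by (simp add: c_def algebra_simps)
  next
    case True
    show ?thesis
    proof (cases "c = 0")
      case False
      then have "c > 0" using c0 by simp
      then show ?thesis using True by simp
    next
      case c: True
      have Kz: "P.Kh r = 0" if r: "t < r" "r < tb" for r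
      proof -
        have "tb - t > 0" using r by simp
        then have "(tb - t) powr \<alpha> > 0" by simp
        then have "I = 0" using c by (simp add: c_def)
        then show ?thesis using P.K_zero[OF times(1) _ r] by (simp add: I_def)
      qed
      have lo: "P.psi tb t - P.psi tb tb \<le> integral {t..tb} (P.Fm tb) + 4 * (tb - t) powr \<alpha> * 0 * I"
        using P.core_lower[OF times(1) times(2), of 0] Kz by (simp add: I_def)
      have up: "P.psi tb tb - P.psi tb t \<le> integral {t..tb} (P.Fp tb) + 4 * (tb - t) powr \<alpha> * 0 * I"
        using P.core_upper[OF times(1) times(2), of 0] Kz by (simp add: I_def)
      show ?thesis using lo up A c True by simp
    qed
  qed
  then show ?thesis unfolding Kfun Im Ip using A_def c_def I_def E_def by simp
qed

end
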